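(* Assume there exist $K\ge1$ and Markov reference policies with densities $\bar\pi_i(x,\cdot)$ w.r.t. $\lambda_{\mathbb A}$, $i\in[n]$, such that $\frac1K\le\frac{\bar\pi_i(x,a)}{\pi_i^*(x,\mathbf o_{i-1};a)}\le K$ for all $(x,\mathbf o_{i-1},a)$ and $i$. Assume (LN): $0<\|\sigma\|_{(n)}<\infty$ and $\sqrt n\,\delta(x,a)\ge\frac{|g(x,a)|\sigma^2(x,a)}{\bar\pi_i(x,a)\|\sigma\|_{(n)}}$ for all $(x,a,i)\in\mathbb X\times\mathbb A\times[n]$. Then $$\mathcal M_n(\mathcal C_\delta(\mathcal I^* ))\ge\frac1{8K^4}\cdot\frac{\|\sigma\|_{(n)}^2}{n}.$$
   Context: Setup. Let $(\mathbb X,\lambda_{\mathbb X})$, $(\mathbb A,\lambda_{\mathbb A})$ be measurable spaces with $\sigma$-finite measures, $\mathbb Y=\mathbb R$ with Lebesgue measure, $\mathbb O:=\mathbb X\times\mathbb A\times\mathbb Y$. A problem instance is $\mathcal I=(\Xi,\Gamma)$, $\Xi$ a probability measure on $\mathbb X$, $\Gamma$ a Markov kernel from $\mathbb X\times\mathbb A$ to $\mathbb Y$ with finite means $\mu(\Gamma)(x,a):=\int y\,\Gamma(dy\mid x,a)$. Fixed known behavioral policies (the same for every instance) have densities $\pi_i^*(x,\mathbf o_{i-1};\cdot)$ w.r.t. $\lambda_{\mathbb A}$. Under $\mathcal I$ data $\mathbf O_n=(X_1,A_1,Y_1,\dots,X_n,A_n,Y_n)$ are generated sequentially: $X_i\sim\Xi$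 independently of $\mathbf O_{i-1}$ (first $i-1$ triples); $A_i\mid(X_i,\mathbf O_{i-1})$ has density $\pi_i^*(X_i,\mathbf O_{i-1};\cdot)$; $Y_i\mid(X_i,A_i,\mathbf O_{i-1})\sim\Gamma(\cdot\mid X_i,A_i)$. $g:\mathbb X\times\mathbb A\to\mathbb R$ is a given evaluation function, $\langle f,h\rangle_{\lambda_{\mathbb A}}:=\int fh\,d\lambda_{\mathbb A}$, $\tau(\mathcal I):=\mathbb E_{X\sim\Xi}[\langle g(X,\cdot),\mu(\Gamma)(X,\cdot)\rangle_{\lambda_{\mathbb A}}]$. True instance $\mathcal I^*=(\Xi^*,\Gamma^* )$, $\mu^*:=\mu(\Gamma^* )$, $\sigma^2(x,a):=\int(y-\mu^*(x,a))^2\Gamma^*(dy\mid x,a)<\infty$. $\|\sigma\|_{(n)}^2:=\frac1n\sum_{i=1}^n\mathbb E_{\mathcal I^*}[g^2(X_i,A_i)\sigma^2(X_i,A_i)/(\pi_i^* )^2(X_i,\mathbf O_{i-1};A_i)]$. For $\delta:\mathbb X\times\mathbb A\to\mathbb R_+$: $\mathcal N(\Xi^* ):=\{\Xi:\mathrm{KL}(\Xi\|\Xi^* )\le1/n\}$, $\mathcal N_\delta(\Gamma^* ):=\{\Gamma:|\mu(\Gamma)(x,a)-\mu^*(x,a)|\le\delta(x,a)\ \forall(x,a)\}$, $\mathcal C_\delta(\mathcal I^* ):=\mathcal N(\Xi^* )\times\mathcal N_\delta(\Gamma^* )$. Local minimax risk: $\mathcal M_n(\mathcal C_\delta(\mathcal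 I^* )):=\inf_{\hat\tau_n}\sup_{\mathcal I\in\mathcal C_\delta(\mathcal I^* )}\mathbb E_{\mathcal I}[\{\hat\tau_n(\mathbf O_n)-\tau(\mathcal I)\}^2]$, the infimum over all measurable $\hat\tau_n:\mathbb O^n\to\mathbb R$. *)

theory Defs
  imports "HOL-Probability.Probability"
begin

text \<open>Data O_n and histories O_{i} are represented as extensional functions on the
  index set {..<k}, i.e. elements of the product measure space below.
  Indices are 0-based: the paper's round i (1..n) is our round i-1, and the
  history O_{i-1} passed to the policy of the paper's round i is an element of
  hist_space MX MA (i-1).\<close>

definition obs_space :: "'x measure \<Rightarrow> 'a measure \<Rightarrow> ('x \<times> 'a \<times> real) measure" where
  "obs_space MX MA = MX \<Otimes>\<^sub>M (MA \<Otimes>\<^sub>M (borel :: real measure))"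

definition hist_space :: "'x measure \<Rightarrow> 'a measure \<Rightarrow> nat \<Rightarrow> (nat \<Rightarrow> 'x \<times> 'a \<times> real) measure" where
  "hist_space MX MA k = PiM {..<k} (\<lambda>_. obs_space MX MA)"

text \<open>pol k x h a is the density (w.r.t. MA) of the behavioural policy of round k
  (0-based) at context x and history h (first k triples).\<close>

fun data_law :: "'x measure \<Rightarrow> 'a measure \<Rightarrow> (nat \<Rightarrow> 'x \<Rightarrow> (nat \<Rightarrow> 'x \<times> 'a \<times> real) \<Rightarrow> 'a \<Rightarrow> real)
    \<Rightarrow> 'x measure \<Rightarrow> ('x \<Rightarrow> 'a \<Rightarrow> real measure) \<Rightarrow> nat \<Rightarrow> (nat \<Rightarrow> 'x \<times> 'a \<times> real) measure" where
  "data_law MX MA pol Xi Gam 0 = return (hist_space MX MA 0) (\<lambda>_. undefined)"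
| "data_law MX MA pol Xi Gam (Suc k) =
     data_law MX MA pol Xi Gam k \<bind> (\<lambda>h.
       Xi \<bind> (\<lambda>x.
         density MA (\<lambda>a. ennreal (pol k x h a)) \<bind> (\<lambda>a.
           Gam x a \<bind> (\<lambda>y. return (hist_space MX MA (Suc k)) (h(k := (x, a, y)))))))"

definition cond_mean :: "('x \<Rightarrow> 'a \<Rightarrow> real measure) \<Rightarrow> 'x \<Rightarrow> 'a \<Rightarrow> real" where
  "cond_mean Gam x a = (\<integral>y. y \<partial>(Gam x a))"

definition is_instance :: "'x measure \<Rightarrow> 'a measure \<Rightarrow> 'x measure \<Rightarrow> ('x \<Rightarrow> 'a \<Rightarrow> real measure) \<Rightarrow> bool" where
  "is_instance MX MA Xi Gam \<longleftrightarrow>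
     prob_space Xi \<and> sets Xi = sets MX \<and>
     (\<lambda>(x, a). Gam x a) \<in> MX \<Otimes>\<^sub>M MA \<rightarrow>\<^sub>M prob_algebra (borel :: real measure) \<and>
     (\<forall>x\<in>space MX. \<forall>a\<in>space MA. integrable (Gam x a) (\<lambda>y. y))"

definition tau :: "'a measure \<Rightarrow> ('x \<Rightarrow> 'a \<Rightarrow> real) \<Rightarrow> 'x measure \<Rightarrow> ('x \<Rightarrow> 'a \<Rightarrow> real measure) \<Rightarrow> real" where
  "tau MA g Xi Gam = (\<integral>x. (\<integral>a. g x a * cond_mean Gam x a \<partial>MA) \<partial>Xi)"

definition tau_defined :: "'a measure \<Rightarrow> ('x \<Rightarrow> 'a \<Rightarrow> real) \<Rightarrow> 'x measure \<Rightarrow> ('x \<Rightarrow> 'a \<Rightarrow> real measure) \<Rightarrow> bool" where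
  "tau_defined MA g Xi Gam \<longleftrightarrow>
     (AE x in Xi. integrable MA (\<lambda>a. g x a * cond_mean Gam x a)) \<and>
     integrable Xi (\<lambda>x. \<integral>a. g x a * cond_mean Gam x a \<partial>MA)"

text \<open>KL(P || Q) <= c, with natural logarithm; KL(P || Q) = +infinity unless P << Q and the
  log-density is P-integrable.  KL_divergence b Q P is the library's
  integral of log_b (dP/dQ) w.r.t. P.\<close>

definition KL_le :: "'x measure \<Rightarrow> 'x measure \<Rightarrow> real \<Rightarrow> bool" where
  "KL_le P Q c \<longleftrightarrow>
     absolutely_continuous Q P \<and>
     integrable P (\<lambda>x. ln (enn2real (RN_deriv Q P x))) \<and>
     KL_divergence (exp 1) Q P \<le> c"

definition local_class :: "'x measure \<Rightarrow> 'a measure \<Rightarrow> ('x \<Rightarrow> 'a \<Rightarrow> real) \<Rightarrow> nat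
    \<Rightarrow> ('x \<Rightarrow> 'a \<Rightarrow> real) \<Rightarrow> 'x measure \<Rightarrow> ('x \<Rightarrow> 'a \<Rightarrow> real measure)
    \<Rightarrow> ('x measure \<times> ('x \<Rightarrow> 'a \<Rightarrow> real measure)) set" where
  "local_class MX MA g n \<delta> Xis Gams =
     {(Xi, Gam). is_instance MX MA Xi Gam \<and> tau_defined MA g Xi Gam \<and>
        KL_le Xi Xis (1 / real n) \<and>
        (\<forall>x\<in>space MX. \<forall>a\<in>space MA. \<bar>cond_mean Gam x a - cond_mean Gams x a\<bar> \<le> \<delta> x a)}"

definition local_minimax :: "'x measure \<Rightarrow> 'a measure \<Rightarrow> (nat \<Rightarrow> 'x \<Rightarrow> (nat \<Rightarrow> 'x \<times> 'a \<times> real) \<Rightarrow> 'a \<Rightarrow> real)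
    \<Rightarrow> ('x \<Rightarrow> 'a \<Rightarrow> real) \<Rightarrow> nat
    \<Rightarrow> ('x measure \<times> ('x \<Rightarrow> 'a \<Rightarrow> real measure)) set \<Rightarrow> ennreal" where
  "local_minimax MX MA pol g n C =
     (INF est \<in> borel_measurable (hist_space MX MA n).
        SUP I \<in> C. \<integral>\<^sup>+ \<omega>. ennreal ((est \<omega> - tau MA g (fst I) (snd I))\<^sup>2)
                          \<partial>data_law MX MA pol (fst I) (snd I) n)"

definition noise_var :: "('x \<Rightarrow> 'a \<Rightarrow> real measure) \<Rightarrow> 'x \<Rightarrow> 'a \<Rightarrow> real" where
  "noise_var Gam x a = (\<integral>y. (y - cond_mean Gam x a)\<^sup>2 \<partial>(Gam x a))"

definition sigma_norm_sq :: "'x measure \<Rightarrow> 'a measure \<Rightarrow> (nat \<Rightarrow> 'x \<Rightarrow> (nat \<Rightarrow> 'x \<times> 'a \<times> real) \<Rightarrow> 'a \<Rightarrow> real)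
    \<Rightarrow> ('x \<Rightarrow> 'a \<Rightarrow> real) \<Rightarrow> nat \<Rightarrow> 'x measure \<Rightarrow> ('x \<Rightarrow> 'a \<Rightarrow> real measure) \<Rightarrow> ennreal" where
  "sigma_norm_sq MX MA pol g n Xis Gams =
     ennreal (1 / real n) *
       (\<Sum>i<n. \<integral>\<^sup>+ \<omega>. ennreal ((g (fst (\<omega> i)) (fst (snd (\<omega> i))))\<^sup>2
                                * noise_var Gams (fst (\<omega> i)) (fst (snd (\<omega> i)))
                                / (pol i (fst (\<omega> i)) (restrict \<omega> {..<i}) (fst (snd (\<omega> i))))\<^sup>2)
                  \<partial>data_law MX MA pol Xis Gams n)"

end

theory Submission
  imports Defs
begin


lemma prob_density:
  assumes "f \<in> borel_measurable M" "(\<integral>\<^sup>+ x. f x \<partial>M) = 1"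
  shows "prob_space (density M f)"
proof (rule prob_spaceI)
  have "(\<integral>\<^sup>+x. f x * indicator (space M) x \<partial>M) = (\<integral>\<^sup>+ x. f x \<partial>M)"
    by (rule nn_integral_cong) simp
  then show "emeasure (density M f) (space (density M f)) = 1"
    using assms by (simp add: emeasure_density)
qed

locale OPE =
  fixes MX :: "'x measure" and MA :: "'a measure"
    and pol :: "nat \<Rightarrow> 'x \<Rightarrow> (nat \<Rightarrow> 'x \<times> 'a \<times> real) \<Rightarrow> 'a \<Rightarrow> real"
    and Xis :: "'x measure" and n :: nat
  assumes sfA: "sigma_finite_measure MA"
    and pol_meas: "\<And>i. i < n \<Longrightarrow>
        (\<lambda>(x, h, a). pol i x h a) \<in> borel_measurable (MX \<Otimes>\<^sub>M (hist_space MX MA i \<Otimes>\<^sub>M MA))"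
    and pol_nonneg: "\<And>i x h a. i < n \<Longrightarrow> x \<in> space MX \<Longrightarrow> h \<in> space (hist_space MX MA i) \<Longrightarrow>
        a \<in> space MA \<Longrightarrow> 0 \<le> pol i x h a"
    and pol_dens: "\<And>i x h. i < n \<Longrightarrow> x \<in> space MX \<Longrightarrow> h \<in> space (hist_space MX MA i) \<Longrightarrow>
        (\<integral>\<^sup>+ a. ennreal (pol i x h a) \<partial>MA) = 1"
    and Xis_prob: "prob_space Xis" and Xis_sets: "sets Xis = sets MX"
begin

abbreviation "H \<equiv> hist_space MX MA"

definition kern :: "('x \<Rightarrow> 'a \<Rightarrow> real measure) \<Rightarrow> nat \<Rightarrow> (nat \<Rightarrow> 'x \<times> 'a \<times> real) \<Rightarrow> (nat \<Rightarrow> 'x \<times> 'a \<times> real) measure" where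
  "kern Gam k h = Xis \<bind> (\<lambda>x. density MA (\<lambda>a. ennreal (pol k x h a)) \<bind> (\<lambda>a.
           Gam x a \<bind> (\<lambda>y. return (H (Suc k)) (h(k := (x, a, y))))))"

lemma law_Suc: "data_law MX MA pol Xis Gam (Suc k) = data_law MX MA pol Xis Gam k \<bind> kern Gam k"
  by (simp add: kern_def[abs_def])

lemma pol_meas': "k < n \<Longrightarrow> (\<lambda>((h, x), a). pol k x h a) \<in> borel_measurable ((H k \<Otimes>\<^sub>M MX) \<Otimes>\<^sub>M MA)"
proof -
  assume k: "k < n"
  have "(\<lambda>(x, h, a). pol k x h a) \<circ> (\<lambda>p. (snd (fst p), (fst (fst p), snd p))) \<in> borel_measurable ((H k \<Otimes>\<^sub>M MX) \<Otimes>\<^sub>M MA)"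
    by (rule measurable_comp[OF _ pol_meas[OF k]]) measurable
  moreover have "(\<lambda>(x, h, a). pol k x h a) \<circ> (\<lambda>p. (snd (fst p), (fst (fst p), snd p))) = (\<lambda>((h, x), a). pol k x h a)"
    by (auto simp: fun_eq_iff)
  ultimately show ?thesis by simp
qed

lemma dens_meas:
  assumes k: "k < n"
  shows "(\<lambda>(h, x). density MA (\<lambda>a. ennreal (pol k x h a))) \<in> H k \<Otimes>\<^sub>M MX \<rightarrow>\<^sub>M prob_algebra MA"
proof (rule measurable_prob_algebraI)
  have pm: "(\<lambda>((h, x), a). pol k x h a) \<in> borel_measurable ((H k \<Otimes>\<^sub>M MX) \<Otimes>\<^sub>M MA)"
    using pol_meas'[OF k] .
  fix p assume p: "p \<in> space (H k \<Otimes>\<^sub>M MX)"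
  then obtain h x where hx: "p = (h, x)" "h \<in> space (H k)" "x \<in> space MX"
    by (auto simp: space_pair_measure)
  have m: "(\<lambda>a. pol k x h a) \<in> borel_measurable MA"
    using measurable_Pair2[OF pm p] hx by simp
  show "prob_space ((\<lambda>(h, x). density MA (\<lambda>a. ennreal (pol k x h a))) p)"
    using hx m pol_dens[OF k hx(3,2)]
    by (auto intro!: prob_density)
next
  have pm: "(\<lambda>((h, x), a). pol k x h a) \<in> borel_measurable ((H k \<Otimes>\<^sub>M MX) \<Otimes>\<^sub>M MA)"
    using pol_meas'[OF k] .
  show "(\<lambda>(h, x). density MA (\<lambda>a. ennreal (pol k x h a))) \<in> H k \<Otimes>\<^sub>M MX \<rightarrow>\<^sub>M subprob_algebra MA"
  proof (rule measurable_subprob_algebra)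
    fix p assume p: "p \<in> space (H k \<Otimes>\<^sub>M MX)"
    then obtain h x where hx: "p = (h, x)" "h \<in> space (H k)" "x \<in> space MX"
      by (auto simp: space_pair_measure)
    have m: "(\<lambda>a. pol k x h a) \<in> borel_measurable MA"
      using measurable_Pair2[OF pm p] hx by simp
    show "subprob_space ((\<lambda>(h, x). density MA (\<lambda>a. ennreal (pol k x h a))) p)"
      using hx m pol_dens[OF k hx(3,2)]
      by (auto intro!: prob_space_imp_subprob_space prob_density)
    show "sets ((\<lambda>(h, x). density MA (\<lambda>a. ennreal (pol k x h a))) p) = sets MA"
      using hx by simp
  next
    fix A assume A: "A \<in> sets MA"
    have "(\<lambda>p. \<integral>\<^sup>+ a. ennreal (pol k (snd p) (fst p) a) * indicator A a \<partial>MA) \<in> borel_measurable (H k \<Otimes>\<^sub>M MX)"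
      using pm A
      by (intro sigma_finite_measure.borel_measurable_nn_integral[OF sfA]) (auto simp: case_prod_beta')
    then show "(\<lambda>p. emeasure ((\<lambda>(h, x). density MA (\<lambda>a. ennreal (pol k x h a))) p) A) \<in> borel_measurable (H k \<Otimes>\<^sub>M MX)"
    proof (rule measurable_cong[THEN iffD1, rotated])
      fix p assume p: "p \<in> space (H k \<Otimes>\<^sub>M MX)"
      then obtain h x where hx: "p = (h, x)" "h \<in> space (H k)" "x \<in> space MX"
        by (auto simp: space_pair_measure)
      have m: "(\<lambda>a. pol k x h a) \<in> borel_measurable MA"
        using measurable_Pair2[OF pm p] hx by simp
      show "(\<integral>\<^sup>+ a. ennreal (pol k (snd p) (fst p) a) * indicator A a \<partial>MA) = emeasure ((\<lambda>(h, x). density MA (\<lambda>a. ennreal (pol k x h a))) p) A"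
        using hx m A by (simp add: emeasure_density)
    qed
  qed
qed

lemma upd_meas: "(\<lambda>p. (fst (fst (fst p)))(k := (snd (fst (fst p)), snd (fst p), snd p)))
   \<in> ((H k \<Otimes>\<^sub>M MX) \<Otimes>\<^sub>M MA) \<Otimes>\<^sub>M borel \<rightarrow>\<^sub>M H (Suc k)"
  unfolding hist_space_def obs_space_def
  by (rule measurable_fun_upd[where J="{..<k}"]) (auto, measurable)

lemma ret_meas:
  "(\<lambda>(p, y). return (H (Suc k)) ((fst (fst p))(k := (snd (fst p), snd p, y))))
     \<in> ((H k \<Otimes>\<^sub>M MX) \<Otimes>\<^sub>M MA) \<Otimes>\<^sub>M borel \<rightarrow>\<^sub>M prob_algebra (H (Suc k))"
proof -
  have "return (H (Suc k)) \<circ> (\<lambda>p. (fst (fst (fst p)))(k := (snd (fst (fst p)), snd (fst p), snd p)))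
     \<in> ((H k \<Otimes>\<^sub>M MX) \<Otimes>\<^sub>M MA) \<Otimes>\<^sub>M borel \<rightarrow>\<^sub>M prob_algebra (H (Suc k))"
    by (rule measurable_comp[OF upd_meas measurable_return_prob_space])
  then show ?thesis
    by (simp add: comp_def case_prod_beta')
qed

lemma Gam_sp:
  assumes Gm: "(\<lambda>(x, a). Gam x a) \<in> MX \<Otimes>\<^sub>M MA \<rightarrow>\<^sub>M prob_algebra (borel :: real measure)"
    and "x \<in> space MX" "a \<in> space MA"
  shows "sets (Gam x a) = sets borel" "prob_space (Gam x a)" "space (Gam x a) = UNIV"
proof -
  have "Gam x a \<in> space (prob_algebra borel)"
    using measurable_space[OF Gm, of "(x, a)"] assms by (simp add: space_pair_measure)
  then show "sets (Gam x a) = sets borel" "prob_space (Gam x a)"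
    by (auto simp: space_prob_algebra)
  then show "space (Gam x a) = UNIV"
    using sets_eq_imp_space_eq by fastforce
qed

lemma R_meas:
  assumes Gm: "(\<lambda>(x, a). Gam x a) \<in> MX \<Otimes>\<^sub>M MA \<rightarrow>\<^sub>M prob_algebra (borel :: real measure)"
  shows "(\<lambda>p. Gam (snd (fst p)) (snd p) \<bind> (\<lambda>y. return (H (Suc k)) ((fst (fst p))(k := (snd (fst p), snd p, y)))))
     \<in> (H k \<Otimes>\<^sub>M MX) \<Otimes>\<^sub>M MA \<rightarrow>\<^sub>M prob_algebra (H (Suc k))"
proof (rule measurable_bind_prob_space2[where N=borel])
  have "(\<lambda>(x, a). Gam x a) \<circ> (\<lambda>p. (snd (fst p), snd p)) \<in> (H k \<Otimes>\<^sub>M MX) \<Otimes>\<^sub>M MA \<rightarrow>\<^sub>M prob_algebra borel"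
    by (rule measurable_comp[OF _ Gm]) measurable
  then show "(\<lambda>p. Gam (snd (fst p)) (snd p)) \<in> (H k \<Otimes>\<^sub>M MX) \<Otimes>\<^sub>M MA \<rightarrow>\<^sub>M prob_algebra borel"
    by (simp add: comp_def)
  have "return (H (Suc k)) \<circ> (\<lambda>p. (fst (fst (fst p)))(k := (snd (fst (fst p)), snd (fst p), snd p)))
     \<in> ((H k \<Otimes>\<^sub>M MX) \<Otimes>\<^sub>M MA) \<Otimes>\<^sub>M borel \<rightarrow>\<^sub>M prob_algebra (H (Suc k))"
    by (rule measurable_comp[OF upd_meas measurable_return_prob_space])
  then show "(\<lambda>(p, y). return (H (Suc k)) ((fst (fst p))(k := (snd (fst p), snd p, y))))
     \<in> ((H k \<Otimes>\<^sub>M MX) \<Otimes>\<^sub>M MA) \<Otimes>\<^sub>M borel \<rightarrow>\<^sub>M prob_algebra (H (Suc k))"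
    by (simp add: comp_def case_prod_beta')
qed

lemma D_meas:
  assumes k: "k < n"
  assumes Gm: "(\<lambda>(x, a). Gam x a) \<in> MX \<Otimes>\<^sub>M MA \<rightarrow>\<^sub>M prob_algebra (borel :: real measure)"
  shows "(\<lambda>p. density MA (\<lambda>a. ennreal (pol k (snd p) (fst p) a)) \<bind> (\<lambda>a. Gam (snd p) a \<bind> (\<lambda>y. return (H (Suc k)) ((fst p)(k := (snd p, a, y))))))
     \<in> H k \<Otimes>\<^sub>M MX \<rightarrow>\<^sub>M prob_algebra (H (Suc k))"
proof (rule measurable_bind_prob_space2[where N=MA])
  show "(\<lambda>p. density MA (\<lambda>a. ennreal (pol k (snd p) (fst p) a))) \<in> H k \<Otimes>\<^sub>M MX \<rightarrow>\<^sub>M prob_algebra MA"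
    using dens_meas[OF k] by (simp add: case_prod_beta')
  show "(\<lambda>(p, a). Gam (snd p) a \<bind> (\<lambda>y. return (H (Suc k)) ((fst p)(k := (snd p, a, y)))))
     \<in> (H k \<Otimes>\<^sub>M MX) \<Otimes>\<^sub>M MA \<rightarrow>\<^sub>M prob_algebra (H (Suc k))"
    using R_meas[OF Gm, of k] by (simp add: case_prod_beta')
qed

lemma kern_meas:
  assumes k: "k < n"
  assumes Gm: "(\<lambda>(x, a). Gam x a) \<in> MX \<Otimes>\<^sub>M MA \<rightarrow>\<^sub>M prob_algebra (borel :: real measure)"
  shows "kern Gam k \<in> H k \<rightarrow>\<^sub>M prob_algebra (H (Suc k))"
proof -
  have "(\<lambda>h. Xis \<bind> (\<lambda>x. density MA (\<lambda>a. ennreal (pol k x h a)) \<bind> (\<lambda>a. Gam x a \<bind> (\<lambda>y. return (H (Suc k)) (h(k := (x, a, y)))))))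
     \<in> H k \<rightarrow>\<^sub>M prob_algebra (H (Suc k))"
  proof (rule measurable_bind_prob_space2[where N=MX])
    show "(\<lambda>h. Xis) \<in> H k \<rightarrow>\<^sub>M prob_algebra MX"
      using Xis_prob Xis_sets by (auto intro!: measurable_const simp: space_prob_algebra)
    show "(\<lambda>(h, x). density MA (\<lambda>a. ennreal (pol k x h a)) \<bind> (\<lambda>a. Gam x a \<bind> (\<lambda>y. return (H (Suc k)) (h(k := (x, a, y))))))
     \<in> H k \<Otimes>\<^sub>M MX \<rightarrow>\<^sub>M prob_algebra (H (Suc k))"
      using D_meas[OF k Gm] by (simp add: case_prod_beta')
  qed
  then show ?thesis by (simp add: kern_def[abs_def])
qed

lemma law_prob:
  assumes Gm: "(\<lambda>(x, a). Gam x a) \<in> MX \<Otimes>\<^sub>M MA \<rightarrow>\<^sub>M prob_algebra (borel :: real measure)"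
  shows "k \<le> n \<Longrightarrow> data_law MX MA pol Xis Gam k \<in> space (prob_algebra (H k))"
proof (induction k)
  case 0
  show ?case by (auto simp: space_prob_algebra hist_space_def space_PiM intro!: prob_space_return)
next
  case (Suc k)
  then have k: "k < n" by simp
  have "(\<lambda>_. data_law MX MA pol Xis Gam k \<bind> kern Gam k) \<in> count_space UNIV \<rightarrow>\<^sub>M prob_algebra (H (Suc k))"
    by (rule measurable_bind_prob_space[OF measurable_const kern_meas[OF k Gm]]) (use Suc in simp)
  then have "data_law MX MA pol Xis Gam k \<bind> kern Gam k \<in> space (prob_algebra (H (Suc k)))"
    by (rule measurable_space[where x=undefined]) simp
  then show ?case by (simp only: law_Suc)
qed

lemma nn_kern:
  assumes k: "k < n"
  assumes Gm: "(\<lambda>(x, a). Gam x a) \<in> MX \<Otimes>\<^sub>M MA \<rightarrow>\<^sub>M prob_algebra (borel :: real measure)"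
    and h: "h \<in> space (H k)" and F: "F \<in> borel_measurable (H (Suc k))"
  shows "(\<integral>\<^sup>+\<omega>. F \<omega> \<partial>kern Gam k h) =
     (\<integral>\<^sup>+x. \<integral>\<^sup>+a. ennreal (pol k x h a) * (\<integral>\<^sup>+y. F (h(k := (x, a, y))) \<partial>Gam x a) \<partial>MA \<partial>Xis)"
proof -
  have D: "(\<lambda>x. density MA (\<lambda>a. ennreal (pol k x h a)) \<bind> (\<lambda>a. Gam x a \<bind> (\<lambda>y. return (H (Suc k)) (h(k := (x, a, y))))))
     \<in> Xis \<rightarrow>\<^sub>M subprob_algebra (H (Suc k))"
    using measurable_Pair2[OF measurable_prob_algebraD[OF D_meas[OF k Gm]] h]
    by (simp add: measurable_cong_sets[OF Xis_sets refl])
  have pm: "(\<lambda>a. pol k x h a) \<in> borel_measurable MA" if x: "x \<in> space MX" for x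
    using measurable_Pair2[OF pol_meas'[OF k], of "(h, x)"] h x by (simp add: space_pair_measure)
  have R: "(\<lambda>a. Gam x a \<bind> (\<lambda>y. return (H (Suc k)) (h(k := (x, a, y)))))
     \<in> density MA (\<lambda>a. ennreal (pol k x h a)) \<rightarrow>\<^sub>M subprob_algebra (H (Suc k))" if x: "x \<in> space MX" for x
    using measurable_Pair2[OF measurable_prob_algebraD[OF R_meas[OF Gm, of k]], of "(h, x)"] h x
    by (simp add: space_pair_measure measurable_cong_sets[OF sets_density refl])
  have ret: "(\<lambda>y. return (H (Suc k)) (h(k := (x, a, y)))) \<in> Gam x a \<rightarrow>\<^sub>M subprob_algebra (H (Suc k))"
    if x: "x \<in> space MX" and a: "a \<in> space MA" for x a
    using measurable_Pair2[OF measurable_prob_algebraD[OF ret_meas[of k]], of "((h, x), a)"] h x a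
    by (simp add: space_pair_measure measurable_cong_sets[OF Gam_sp(1)[OF Gm x a] refl])
  have upd_sp: "h(k := (x, a, y)) \<in> space (H (Suc k))"
    if x: "x \<in> space MX" and a: "a \<in> space MA" for x a y
    using measurable_space[OF upd_meas[of k], of "(((h, x), a), y)"] h x a
    by (simp add: space_pair_measure)
  have inner: "(\<integral>\<^sup>+\<omega>. F \<omega> \<partial>(Gam x a \<bind> (\<lambda>y. return (H (Suc k)) (h(k := (x, a, y))))))
      = (\<integral>\<^sup>+y. F (h(k := (x, a, y))) \<partial>Gam x a)"
    if x: "x \<in> space MX" and a: "a \<in> space MA" for x a
    using nn_integral_bind[OF F ret[OF x a]] upd_sp[OF x a] F
    by (simp add: nn_integral_return)
  have "(\<integral>\<^sup>+\<omega>. F \<omega> \<partial>kern Gam k h) = (\<integral>\<^sup>+x. \<integral>\<^sup>+\<omega>. F \<omega> \<partial>(density MA (\<lambda>a. ennreal (pol k x h a)) \<bind> (\<lambda>a. Gam x a \<bind> (\<lambda>y. return (H (Suc k)) (h(k := (x, a, y)))))) \<partial>Xis)"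
    unfolding kern_def by (rule nn_integral_bind[OF F D])
  also have "\<dots> = (\<integral>\<^sup>+x. \<integral>\<^sup>+a. ennreal (pol k x h a) * (\<integral>\<^sup>+y. F (h(k := (x, a, y))) \<partial>Gam x a) \<partial>MA \<partial>Xis)"
  proof (rule nn_integral_cong)
    fix x assume "x \<in> space Xis"
    then have x: "x \<in> space MX" using sets_eq_imp_space_eq[OF Xis_sets] by simp
    have "(\<integral>\<^sup>+\<omega>. F \<omega> \<partial>(density MA (\<lambda>a. ennreal (pol k x h a)) \<bind> (\<lambda>a. Gam x a \<bind> (\<lambda>y. return (H (Suc k)) (h(k := (x, a, y)))))))
       = (\<integral>\<^sup>+a. \<integral>\<^sup>+\<omega>. F \<omega> \<partial>(Gam x a \<bind> (\<lambda>y. return (H (Suc k)) (h(k := (x, a, y))))) \<partial>density MA (\<lambda>a. ennreal (pol k x h a)))"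
      by (rule nn_integral_bind[OF F R[OF x]])
    also have "\<dots> = (\<integral>\<^sup>+a. ennreal (pol k x h a) * (\<integral>\<^sup>+\<omega>. F \<omega> \<partial>(Gam x a \<bind> (\<lambda>y. return (H (Suc k)) (h(k := (x, a, y)))))) \<partial>MA)"
    proof (rule nn_integral_density)
      show "(\<lambda>a. ennreal (pol k x h a)) \<in> borel_measurable MA" using pm[OF x] by simp
      show "(\<lambda>a. \<integral>\<^sup>+\<omega>. F \<omega> \<partial>(Gam x a \<bind> (\<lambda>y. return (H (Suc k)) (h(k := (x, a, y)))))) \<in> borel_measurable MA"
        using measurable_compose[OF R[OF x] nn_integral_measurable_subprob_algebra[OF F]]
        by (simp add: measurable_cong_sets[OF sets_density refl])
    qed
    also have "\<dots> = (\<integral>\<^sup>+a. ennreal (pol k x h a) * (\<integral>\<^sup>+y. F (h(k := (x, a, y))) \<partial>Gam x a) \<partial>MA)"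
      by (rule nn_integral_cong) (simp add: inner[OF x])
    finally show "(\<integral>\<^sup>+\<omega>. F \<omega> \<partial>(density MA (\<lambda>a. ennreal (pol k x h a)) \<bind> (\<lambda>a. Gam x a \<bind> (\<lambda>y. return (H (Suc k)) (h(k := (x, a, y)))))))
       = (\<integral>\<^sup>+a. ennreal (pol k x h a) * (\<integral>\<^sup>+y. F (h(k := (x, a, y))) \<partial>Gam x a) \<partial>MA)" .
  qed
  finally show ?thesis .
qed

lemma law_sets:
  assumes Gm: "(\<lambda>(x, a). Gam x a) \<in> MX \<Otimes>\<^sub>M MA \<rightarrow>\<^sub>M prob_algebra (borel :: real measure)"
    and k: "k \<le> n"
  shows "sets (data_law MX MA pol Xis Gam k) = sets (H k)" "prob_space (data_law MX MA pol Xis Gam k)"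
  using law_prob[OF Gm k] by (auto simp: space_prob_algebra)

lemma nn_law_Suc:
  assumes k: "k < n"
  assumes Gm: "(\<lambda>(x, a). Gam x a) \<in> MX \<Otimes>\<^sub>M MA \<rightarrow>\<^sub>M prob_algebra (borel :: real measure)"
    and F: "F \<in> borel_measurable (H (Suc k))"
  shows "(\<integral>\<^sup>+\<omega>. F \<omega> \<partial>data_law MX MA pol Xis Gam (Suc k)) =
     (\<integral>\<^sup>+h. (\<integral>\<^sup>+\<omega>. F \<omega> \<partial>kern Gam k h) \<partial>data_law MX MA pol Xis Gam k)"
proof -
  have "kern Gam k \<in> data_law MX MA pol Xis Gam k \<rightarrow>\<^sub>M subprob_algebra (H (Suc k))"
    using measurable_prob_algebraD[OF kern_meas[OF k Gm]]
    by (subst measurable_cong_sets[OF law_sets(1)[OF Gm] refl]) (use k in auto)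
  then show ?thesis
    unfolding law_Suc by (rule nn_integral_bind[OF F])
qed

lemma kern_int_meas:
  assumes k: "k < n"
  assumes Gm: "(\<lambda>(x, a). Gam x a) \<in> MX \<Otimes>\<^sub>M MA \<rightarrow>\<^sub>M prob_algebra (borel :: real measure)"
    and F: "F \<in> borel_measurable (H (Suc k))"
  shows "(\<lambda>h. \<integral>\<^sup>+\<omega>. F \<omega> \<partial>kern Gam k h) \<in> borel_measurable (H k)"
  using measurable_compose[OF measurable_prob_algebraD[OF kern_meas[OF k Gm]] nn_integral_measurable_subprob_algebra[OF F]] .

lemma compare:
  assumes Gm: "(\<lambda>(x, a). Gam x a) \<in> MX \<Otimes>\<^sub>M MA \<rightarrow>\<^sub>M prob_algebra (borel :: real measure)"
  assumes Gm1: "(\<lambda>(x, a). Gam1 x a) \<in> MX \<Otimes>\<^sub>M MA \<rightarrow>\<^sub>M prob_algebra (borel :: real measure)"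
  assumes cmp: "\<And>x a G. x \<in> space MX \<Longrightarrow> a \<in> space MA \<Longrightarrow> G \<in> borel_measurable borel \<Longrightarrow>
      c * (\<integral>\<^sup>+y. G y \<partial>Gam x a) \<le> (\<integral>\<^sup>+y. G y \<partial>Gam1 x a)"
  shows "k \<le> n \<Longrightarrow> F \<in> borel_measurable (H k) \<Longrightarrow>
      c ^ k * (\<integral>\<^sup>+\<omega>. F \<omega> \<partial>data_law MX MA pol Xis Gam k) \<le> (\<integral>\<^sup>+\<omega>. F \<omega> \<partial>data_law MX MA pol Xis Gam1 k)"
proof (induction k arbitrary: F)
  case 0
  then show ?case by simp
next
  case (Suc k)
  then have k: "k < n" by simp
  note F = Suc.prems(2)
  define I where "I h = (\<integral>\<^sup>+\<omega>. F \<omega> \<partial>kern Gam k h)" for h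
  define I1 where "I1 h = (\<integral>\<^sup>+\<omega>. F \<omega> \<partial>kern Gam1 k h)" for h
  have Im: "(\<lambda>h. c * I h) \<in> borel_measurable (H k)"
    unfolding I_def by (rule borel_measurable_times_ennreal[OF borel_measurable_const kern_int_meas[OF k Gm F]])
  have le: "c * I h \<le> I1 h" if h: "h \<in> space (H k)" for h
  proof -
    have "c * I h = (\<integral>\<^sup>+\<omega>. c * F \<omega> \<partial>kern Gam k h)"
      unfolding I_def
    proof (rule nn_integral_cmult[symmetric])
      have "sets (kern Gam k h) = sets (H (Suc k))"
        using measurable_space[OF kern_meas[OF k Gm] h] by (simp add: space_prob_algebra)
      then show "F \<in> borel_measurable (kern Gam k h)"
        using F by (subst measurable_cong_sets) auto
    qed
    also have "\<dots> = (\<integral>\<^sup>+x. \<integral>\<^sup>+a. ennreal (pol k x h a) * (\<integral>\<^sup>+y. c * F (h(k := (x, a, y))) \<partial>Gam x a) \<partial>MA \<partial>Xis)"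
      by (rule nn_kern[OF k Gm h borel_measurable_times_ennreal[OF borel_measurable_const F]])
    also have "\<dots> \<le> (\<integral>\<^sup>+x. \<integral>\<^sup>+a. ennreal (pol k x h a) * (\<integral>\<^sup>+y. F (h(k := (x, a, y))) \<partial>Gam1 x a) \<partial>MA \<partial>Xis)"
    proof (intro nn_integral_mono mult_left_mono order.refl)
      fix x a assume "x \<in> space Xis" "a \<in> space MA"
      then have x: "x \<in> space MX" and a: "a \<in> space MA"
        using sets_eq_imp_space_eq[OF Xis_sets] by auto
      have Gmeas: "(\<lambda>y. F (h(k := (x, a, y)))) \<in> borel_measurable borel"
        using measurable_compose[OF measurable_Pair2[OF upd_meas, of "((h, x), a)"] F] h x a
        by (simp add: space_pair_measure fun_upd_def)
      have "(\<integral>\<^sup>+y. c * F (h(k := (x, a, y))) \<partial>Gam x a) = c * (\<integral>\<^sup>+y. F (h(k := (x, a, y))) \<partial>Gam x a)"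
        by (rule nn_integral_cmult) (use Gmeas in \<open>simp add: measurable_cong_sets[OF Gam_sp(1)[OF Gm x a] refl]\<close>)
      also have "\<dots> \<le> (\<integral>\<^sup>+y. F (h(k := (x, a, y))) \<partial>Gam1 x a)"
        by (rule cmp[OF x a Gmeas])
      finally show "(\<integral>\<^sup>+y. c * F (h(k := (x, a, y))) \<partial>Gam x a) \<le> (\<integral>\<^sup>+y. F (h(k := (x, a, y))) \<partial>Gam1 x a)" .
    qed simp
    also have "\<dots> = I1 h"
      unfolding I1_def by (rule nn_kern[OF k Gm1 h F, symmetric])
    finally show ?thesis .
  qed
  have "c ^ Suc k * (\<integral>\<^sup>+\<omega>. F \<omega> \<partial>data_law MX MA pol Xis Gam (Suc k)) = c ^ k * (\<integral>\<^sup>+h. c * I h \<partial>data_law MX MA pol Xis Gam k)"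
    unfolding nn_law_Suc[OF k Gm F] I_def
    by (subst nn_integral_cmult) (use kern_int_meas[OF k Gm F] k in \<open>simp_all add: measurable_cong_sets[OF law_sets(1)[OF Gm] refl] mult_ac\<close>)
  also have "\<dots> \<le> (\<integral>\<^sup>+h. c * I h \<partial>data_law MX MA pol Xis Gam1 k)"
    using Suc.IH[OF _ Im] k by simp
  also have "\<dots> \<le> (\<integral>\<^sup>+h. I1 h \<partial>data_law MX MA pol Xis Gam1 k)"
  proof (rule nn_integral_mono)
    fix h assume "h \<in> space (data_law MX MA pol Xis Gam1 k)"
    then have "h \<in> space (H k)" using sets_eq_imp_space_eq[OF law_sets(1)[OF Gm1, of k]] k by simp
    then show "c * I h \<le> I1 h" by (rule le)
  qed
  also have "\<dots> = (\<integral>\<^sup>+\<omega>. F \<omega> \<partial>data_law MX MA pol Xis Gam1 (Suc k))"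
    unfolding nn_law_Suc[OF k Gm1 F] I1_def ..
  finally show ?case .
qed

lemma kern_const:
  assumes k: "k < n"
  assumes Gm: "(\<lambda>(x, a). Gam x a) \<in> MX \<Otimes>\<^sub>M MA \<rightarrow>\<^sub>M prob_algebra (borel :: real measure)"
    and h: "h \<in> space (H k)" and F: "F \<in> borel_measurable (H (Suc k))"
    and inv: "\<And>x a y. x \<in> space MX \<Longrightarrow> a \<in> space MA \<Longrightarrow> F (h(k := (x, a, y))) = c"
  shows "(\<integral>\<^sup>+\<omega>. F \<omega> \<partial>kern Gam k h) = c"
proof -
  have "(\<integral>\<^sup>+\<omega>. F \<omega> \<partial>kern Gam k h) =
     (\<integral>\<^sup>+x. \<integral>\<^sup>+a. ennreal (pol k x h a) * (\<integral>\<^sup>+y. F (h(k := (x, a, y))) \<partial>Gam x a) \<partial>MA \<partial>Xis)"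
    by (rule nn_kern[OF k Gm h F])
  also have "\<dots> = (\<integral>\<^sup>+x. c \<partial>Xis)"
  proof (rule nn_integral_cong)
    fix x assume "x \<in> space Xis"
    then have x: "x \<in> space MX" using sets_eq_imp_space_eq[OF Xis_sets] by simp
    have pm: "(\<lambda>a. pol k x h a) \<in> borel_measurable MA"
      using measurable_Pair2[OF pol_meas'[OF k], of "(h, x)"] h x by (simp add: space_pair_measure)
    have "(\<integral>\<^sup>+a. ennreal (pol k x h a) * (\<integral>\<^sup>+y. F (h(k := (x, a, y))) \<partial>Gam x a) \<partial>MA)
        = (\<integral>\<^sup>+a. ennreal (pol k x h a) * c \<partial>MA)"
    proof (rule nn_integral_cong)
      fix a assume a: "a \<in> space MA"
      have "(\<integral>\<^sup>+y. F (h(k := (x, a, y))) \<partial>Gam x a) = (\<integral>\<^sup>+y. c \<partial>Gam x a)"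
        by (rule nn_integral_cong) (simp add: inv[OF x a])
      also have "\<dots> = c"
        using prob_space.emeasure_space_1[OF Gam_sp(2)[OF Gm x a]] by simp
      finally show "ennreal (pol k x h a) * (\<integral>\<^sup>+y. F (h(k := (x, a, y))) \<partial>Gam x a) = ennreal (pol k x h a) * c" by simp
    qed
    also have "\<dots> = (\<integral>\<^sup>+a. ennreal (pol k x h a) \<partial>MA) * c"
      by (rule nn_integral_multc) (use pm in simp)
    also have "\<dots> = c" using pol_dens[OF k x h] by simp
    finally show "(\<integral>\<^sup>+a. ennreal (pol k x h a) * (\<integral>\<^sup>+y. F (h(k := (x, a, y))) \<partial>Gam x a) \<partial>MA) = c" .
  qed
  also have "\<dots> = c"
    using prob_space.emeasure_space_1[OF Xis_prob] by simp
  finally show ?thesis .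
qed

lemma marginal:
  assumes Gm: "(\<lambda>(x, a). Gam x a) \<in> MX \<Otimes>\<^sub>M MA \<rightarrow>\<^sub>M prob_algebra (borel :: real measure)"
    and Pm: "\<And>m. Suc i \<le> m \<Longrightarrow> m \<le> n \<Longrightarrow> Phi \<in> borel_measurable (H m)"
    and Pinv: "\<And>w j z. i < j \<Longrightarrow> Phi (w(j := z)) = Phi w"
    and m: "Suc i \<le> m" "m \<le> n"
  shows "(\<integral>\<^sup>+\<omega>. Phi \<omega> \<partial>data_law MX MA pol Xis Gam m) = (\<integral>\<^sup>+\<omega>. Phi \<omega> \<partial>data_law MX MA pol Xis Gam (Suc i))"
  using m(1)
proof (induction m rule: dec_induct)
  case base
  then show ?case by simp
next
  case (step m')
  then have k: "m' < n" using m by simp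
  have "(\<integral>\<^sup>+\<omega>. Phi \<omega> \<partial>data_law MX MA pol Xis Gam (Suc m')) =
     (\<integral>\<^sup>+h. (\<integral>\<^sup>+\<omega>. Phi \<omega> \<partial>kern Gam m' h) \<partial>data_law MX MA pol Xis Gam m')"
    by (rule nn_law_Suc[OF k Gm Pm]) (use step k in auto)
  also have "\<dots> = (\<integral>\<^sup>+h. Phi h \<partial>data_law MX MA pol Xis Gam m')"
  proof (rule nn_integral_cong)
    fix h assume "h \<in> space (data_law MX MA pol Xis Gam m')"
    then have h: "h \<in> space (H m')" using sets_eq_imp_space_eq[OF law_sets(1)[OF Gm, of m']] k by simp
    show "(\<integral>\<^sup>+\<omega>. Phi \<omega> \<partial>kern Gam m' h) = Phi h"
      by (rule kern_const[OF k Gm h Pm]) (use step k Pinv in auto)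
  qed
  also have "\<dots> = (\<integral>\<^sup>+\<omega>. Phi \<omega> \<partial>data_law MX MA pol Xis Gam (Suc i))"
    by (rule step.IH)
  finally show ?case .
qed

end



definition mix :: "real \<Rightarrow> real measure \<Rightarrow> real measure \<Rightarrow> real measure" where
  "mix e N1 N2 = measure_pmf (bernoulli_pmf e) \<bind> (\<lambda>b. if b then N1 else N2)"

lemma mix_kernel:
  assumes "N1 \<in> space (prob_algebra borel)" "N2 \<in> space (prob_algebra borel)"
  shows "(\<lambda>b. if b then N1 else N2) \<in> measure_pmf (bernoulli_pmf e) \<rightarrow>\<^sub>M prob_algebra borel"
  using assms by simp

lemma mix_sp:
  assumes "N1 \<in> space (prob_algebra borel)" "N2 \<in> space (prob_algebra borel)"
  shows "mix e N1 N2 \<in> space (prob_algebra borel)"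
proof -
  have "measure_pmf (bernoulli_pmf e) \<in> space (prob_algebra (count_space UNIV))"
    by (simp add: space_prob_algebra prob_space_measure_pmf)
  then have "(\<lambda>_::unit. measure_pmf (bernoulli_pmf e) \<bind> (\<lambda>b. if b then N1 else N2)) \<in> count_space UNIV \<rightarrow>\<^sub>M prob_algebra borel"
    by (intro measurable_bind_prob_space[OF measurable_const]) (use assms in auto)
  from measurable_space[OF this, of undefined] show ?thesis by (simp add: mix_def)
qed

lemma mix_nn:
  assumes N1: "N1 \<in> space (prob_algebra borel)" and N2: "N2 \<in> space (prob_algebra borel)"
    and e: "0 \<le> e" "e \<le> 1" and G: "G \<in> borel_measurable borel"
  shows "(\<integral>\<^sup>+y. G y \<partial>mix e N1 N2) = ennreal e * (\<integral>\<^sup>+y. G y \<partial>N1) + ennreal (1 - e) * (\<integral>\<^sup>+y. G y \<partial>N2)"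
proof -
  have "(\<integral>\<^sup>+y. G y \<partial>mix e N1 N2) = (\<integral>\<^sup>+b. (\<integral>\<^sup>+y. G y \<partial>(if b then N1 else N2)) \<partial>measure_pmf (bernoulli_pmf e))"
    unfolding mix_def by (rule nn_integral_bind[OF G measurable_prob_algebraD[OF mix_kernel[OF N1 N2]]])
  also have "\<dots> = (\<integral>\<^sup>+b. (if b then (\<integral>\<^sup>+y. G y \<partial>N1) else (\<integral>\<^sup>+y. G y \<partial>N2)) \<partial>measure_pmf (bernoulli_pmf e))"
    by (rule nn_integral_cong) simp
  also have "\<dots> = ennreal e * (\<integral>\<^sup>+y. G y \<partial>N1) + ennreal (1 - e) * (\<integral>\<^sup>+y. G y \<partial>N2)"
    by (subst nn_integral_measure_pmf_support[of UNIV]) (use e in \<open>auto simp: UNIV_bool mult_ac\<close>)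
  finally show ?thesis .
qed

lemma mix_meas:
  assumes Mm[measurable]: "Mf \<in> borel_measurable N" and Gm[measurable]: "G \<in> N \<rightarrow>\<^sub>M prob_algebra borel"
  shows "(\<lambda>p. mix e (return borel (Mf p)) (G p)) \<in> N \<rightarrow>\<^sub>M prob_algebra borel"
  unfolding mix_def
proof (rule measurable_bind_prob_space2[where N="measure_pmf (bernoulli_pmf e)"])
  show "(\<lambda>p. measure_pmf (bernoulli_pmf e)) \<in> N \<rightarrow>\<^sub>M prob_algebra (measure_pmf (bernoulli_pmf e))"
    by (rule measurable_const) (simp add: space_prob_algebra prob_space_measure_pmf)
  have "(\<lambda>q. if snd q then return borel (Mf (fst q)) else G (fst q)) \<in> N \<Otimes>\<^sub>M measure_pmf (bernoulli_pmf e) \<rightarrow>\<^sub>M prob_algebra borel"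
    by measurable
  then show "(\<lambda>(p, b). if b then return borel (Mf p) else G p) \<in> N \<Otimes>\<^sub>M measure_pmf (bernoulli_pmf e) \<rightarrow>\<^sub>M prob_algebra borel"
    by (simp add: case_prod_beta')
qed

lemma enn_aux:
  assumes e: "0 \<le> e" "e \<le> 1" and P: "P < \<infinity>"
  shows "enn2real (ennreal e * ennreal M + ennreal (1 - e) * P) = e * max M 0 + (1 - e) * enn2real P"
proof -
  obtain p where p: "P = ennreal p" "0 \<le> p" using P by (cases P) auto
  have 1: "ennreal e * ennreal M = ennreal (e * max M 0)"
    using e by (cases "M \<le> 0") (auto simp: ennreal_mult' ennreal_neg max_def)
  have 2: "ennreal (1 - e) * P = ennreal ((1 - e) * p)"
    using e p by (simp add: ennreal_mult')
  have 3: "0 \<le> e * max M 0" "0 \<le> (1 - e) * p" using e p by auto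
  have eq: "ennreal e * ennreal M + ennreal (1 - e) * P = ennreal (e * max M 0 + (1 - e) * p)"
    unfolding 1 2 using 3 by (simp add: ennreal_plus)
  have 4: "enn2real (ennreal (e * max M 0 + (1 - e) * p)) = e * max M 0 + (1 - e) * p"
    using 3 by (intro enn2real_ennreal) simp
  have 5: "enn2real P = p" using p by simp
  show ?thesis unfolding eq 5 by (rule 4)
qed

lemma mix_mean:
  assumes N2: "N2 \<in> space (prob_algebra borel)" and e: "0 \<le> e" "e \<le> 1"
    and int: "integrable N2 (\<lambda>y. y)"
  shows "integrable (mix e (return borel M) N2) (\<lambda>y. y)"
    "(\<integral>y. y \<partial>mix e (return borel M) N2) = e * M + (1 - e) * (\<integral>y. y \<partial>N2)"
proof -
  have N1: "return borel M \<in> space (prob_algebra borel)"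
    by (simp add: space_prob_algebra prob_space_return)
  have sN2: "sets N2 = sets borel" using N2 by (simp add: space_prob_algebra)
  have smix: "sets (mix e (return borel M) N2) = sets borel"
    using mix_sp[OF N1 N2] by (simp add: space_prob_algebra)
  have nn: "(\<integral>\<^sup>+y. G y \<partial>mix e (return borel M) N2) = ennreal e * G M + ennreal (1 - e) * (\<integral>\<^sup>+y. G y \<partial>N2)"
    if G: "G \<in> borel_measurable borel" for G
    using mix_nn[OF N1 N2 e G] G by (simp add: nn_integral_return)
  have fin: "(\<integral>\<^sup>+y. ennreal (norm y) \<partial>N2) < \<infinity>"
    using int by (simp add: integrable_iff_bounded)
  have fin1: "(\<integral>\<^sup>+y. ennreal y \<partial>N2) < \<infinity>"
    by (rule le_less_trans[OF nn_integral_mono fin]) auto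
  have fin2: "(\<integral>\<^sup>+y. ennreal (- y) \<partial>N2) < \<infinity>"
    by (rule le_less_trans[OF nn_integral_mono fin]) auto
  show I: "integrable (mix e (return borel M) N2) (\<lambda>y. y)"
    unfolding integrable_iff_bounded
  proof
    show "(\<lambda>y. y) \<in> borel_measurable (mix e (return borel M) N2)"
      by (simp add: measurable_cong_sets[OF smix refl])
    show "(\<integral>\<^sup>+y. ennreal (norm y) \<partial>mix e (return borel M) N2) < \<infinity>"
      using fin by (subst nn) (auto simp: ennreal_mult_less_top)
  qed
  have "(\<integral>y. y \<partial>mix e (return borel M) N2) =
     enn2real (\<integral>\<^sup>+y. ennreal y \<partial>mix e (return borel M) N2) - enn2real (\<integral>\<^sup>+y. ennreal (- y) \<partial>mix e (return borel M) N2)"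
    by (rule real_lebesgue_integral_def[OF I])
  also have "\<dots> = (e * max M 0 + (1 - e) * enn2real (\<integral>\<^sup>+y. ennreal y \<partial>N2))
      - (e * max (- M) 0 + (1 - e) * enn2real (\<integral>\<^sup>+y. ennreal (- y) \<partial>N2))"
  proof -
    have a: "(\<integral>\<^sup>+y. ennreal y \<partial>mix e (return borel M) N2) = ennreal e * ennreal M + ennreal (1 - e) * (\<integral>\<^sup>+y. ennreal y \<partial>N2)"
      by (rule nn) simp
    have b: "(\<integral>\<^sup>+y. ennreal (- y) \<partial>mix e (return borel M) N2) = ennreal e * ennreal (- M) + ennreal (1 - e) * (\<integral>\<^sup>+y. ennreal (- y) \<partial>N2)"
      by (rule nn) simp
    show ?thesis by (simp only: a b enn_aux[OF e fin1] enn_aux[OF e fin2])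
  qed
  also have "\<dots> = e * M + (1 - e) * (enn2real (\<integral>\<^sup>+y. ennreal y \<partial>N2) - enn2real (\<integral>\<^sup>+y. ennreal (- y) \<partial>N2))"
    by (simp add: max_def algebra_simps)
  also have "\<dots> = e * M + (1 - e) * (\<integral>y. y \<partial>N2)"
    by (simp add: real_lebesgue_integral_def[OF int])
  finally show "(\<integral>y. y \<partial>mix e (return borel M) N2) = e * M + (1 - e) * (\<integral>y. y \<partial>N2)" .
qed

lemma mix_ge:
  assumes N1: "N1 \<in> space (prob_algebra borel)" and N2: "N2 \<in> space (prob_algebra borel)"
    and e: "0 \<le> e" "e \<le> 1" and G: "G \<in> borel_measurable borel"
  shows "ennreal (1 - e) * (\<integral>\<^sup>+y. G y \<partial>N2) \<le> (\<integral>\<^sup>+y. G y \<partial>mix e N1 N2)"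
  unfolding mix_nn[OF N1 N2 e G] by (rule add_increasing) auto

lemma var_alt:
  fixes M :: "real measure"
  assumes P: "prob_space M" and I1: "integrable M (\<lambda>y. y)"
    and I2: "integrable M (\<lambda>y. (y - (\<integral>z. z \<partial>M))\<^sup>2)"
  shows "integrable M (\<lambda>y. y\<^sup>2)" "(\<integral>y. (y - (\<integral>z. z \<partial>M))\<^sup>2 \<partial>M) = (\<integral>y. y\<^sup>2 \<partial>M) - (\<integral>y. y \<partial>M)\<^sup>2"
proof -
  interpret prob_space M by fact
  define m where "m = (\<integral>z. z \<partial>M)"
  have eq: "(\<lambda>y. y\<^sup>2) = (\<lambda>y. (y - m)\<^sup>2 + (2 * m * y - m\<^sup>2))"
    by (simp add: fun_eq_iff power2_eq_square algebra_simps)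
  show I3: "integrable M (\<lambda>y. y\<^sup>2)"
    unfolding eq using I2 I1 unfolding m_def[symmetric] by (intro Bochner_Integration.integrable_add Bochner_Integration.integrable_diff integrable_mult_right) auto
  show "(\<integral>y. (y - (\<integral>z. z \<partial>M))\<^sup>2 \<partial>M) = (\<integral>y. y\<^sup>2 \<partial>M) - (\<integral>y. y \<partial>M)\<^sup>2"
    using variance_eq[OF I1 I3] by simp
qed

lemma kernel_mean_meas:
  assumes Gk: "Gk \<in> N \<rightarrow>\<^sub>M prob_algebra (borel :: real measure)"
  shows "(\<lambda>p. \<integral>y. y \<partial>Gk p) \<in> borel_measurable N" "(\<lambda>p. \<integral>y. y\<^sup>2 \<partial>Gk p) \<in> borel_measurable N"
  using measurable_compose[OF measurable_prob_algebraD[OF Gk] integral_measurable_subprob_algebra[of "\<lambda>y. y"]]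
    measurable_compose[OF measurable_prob_algebraD[OF Gk] integral_measurable_subprob_algebra[of "\<lambda>y. y\<^sup>2"]]
  by auto




locale MAIN =
  fixes MX :: "'x measure" and MA :: "'a measure"
    and pol :: "nat \<Rightarrow> 'x \<Rightarrow> (nat \<Rightarrow> 'x \<times> 'a \<times> real) \<Rightarrow> 'a \<Rightarrow> real"
    and pbar :: "nat \<Rightarrow> 'x \<Rightarrow> 'a \<Rightarrow> real"
    and g \<delta> :: "'x \<Rightarrow> 'a \<Rightarrow> real"
    and Xis :: "'x measure" and Gams :: "'x \<Rightarrow> 'a \<Rightarrow> real measure"
    and n :: nat and K :: real
  assumes sfX: "sigma_finite_measure MX"
    and sfA: "sigma_finite_measure MA"
    and pol_meas: "\<And>i. i < n \<Longrightarrow>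
        (\<lambda>(x, h, a). pol i x h a) \<in> borel_measurable (MX \<Otimes>\<^sub>M (hist_space MX MA i \<Otimes>\<^sub>M MA))"
    and pol_nonneg: "\<And>i x h a. i < n \<Longrightarrow> x \<in> space MX \<Longrightarrow> h \<in> space (hist_space MX MA i) \<Longrightarrow>
        a \<in> space MA \<Longrightarrow> 0 \<le> pol i x h a"
    and pol_dens: "\<And>i x h. i < n \<Longrightarrow> x \<in> space MX \<Longrightarrow> h \<in> space (hist_space MX MA i) \<Longrightarrow>
        (\<integral>\<^sup>+ a. ennreal (pol i x h a) \<partial>MA) = 1"
    and g_meas: "(\<lambda>(x, a). g x a) \<in> borel_measurable (MX \<Otimes>\<^sub>M MA)"
    and delta_nonneg: "\<And>x a. x \<in> space MX \<Longrightarrow> a \<in> space MA \<Longrightarrow> 0 \<le> \<delta> x a"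
    and inst: "is_instance MX MA Xis Gams"
    and tau_def: "tau_defined MA g Xis Gams"
    and var_fin: "\<And>x a. x \<in> space MX \<Longrightarrow> a \<in> space MA \<Longrightarrow>
        integrable (Gams x a) (\<lambda>y. (y - cond_mean Gams x a)\<^sup>2)"
    and K_ge: "1 \<le> K"
    and pbar_meas: "\<And>i. i < n \<Longrightarrow> (\<lambda>(x, a). pbar i x a) \<in> borel_measurable (MX \<Otimes>\<^sub>M MA)"
    and pbar_nonneg: "\<And>i x a. i < n \<Longrightarrow> x \<in> space MX \<Longrightarrow> a \<in> space MA \<Longrightarrow> 0 \<le> pbar i x a"
    and pbar_dens: "\<And>i x. i < n \<Longrightarrow> x \<in> space MX \<Longrightarrow> (\<integral>\<^sup>+ a. ennreal (pbar i x a) \<partial>MA) = 1"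
    and ratio: "\<And>i x h a. i < n \<Longrightarrow> x \<in> space MX \<Longrightarrow> h \<in> space (hist_space MX MA i) \<Longrightarrow>
        a \<in> space MA \<Longrightarrow> 1 / K \<le> pbar i x a / pol i x h a \<and> pbar i x a / pol i x h a \<le> K"
    and LN_pos: "0 < sigma_norm_sq MX MA pol g n Xis Gams"
    and LN_fin: "sigma_norm_sq MX MA pol g n Xis Gams < \<infinity>"
    and LN: "\<And>i x a. i < n \<Longrightarrow> x \<in> space MX \<Longrightarrow> a \<in> space MA \<Longrightarrow>
        sqrt (real n) * \<delta> x a \<ge>
          \<bar>g x a\<bar> * noise_var Gams x a /
            (pbar i x a * sqrt (enn2real (sigma_norm_sq MX MA pol g n Xis Gams)))"
begin

lemma Xis_prob: "prob_space Xis" and Xis_sets: "sets Xis = sets MX"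
  and Gm: "(\<lambda>(x, a). Gams x a) \<in> MX \<Otimes>\<^sub>M MA \<rightarrow>\<^sub>M prob_algebra (borel :: real measure)"
  and Gint: "\<And>x a. x \<in> space MX \<Longrightarrow> a \<in> space MA \<Longrightarrow> integrable (Gams x a) (\<lambda>y. y)"
  using inst by (auto simp: is_instance_def)

lemma sp_Xis: "space Xis = space MX"
  using sets_eq_imp_space_eq[OF Xis_sets] .

sublocale O: OPE MX MA pol Xis n
  using OPE.intro[OF sfA pol_meas pol_nonneg pol_dens Xis_prob Xis_sets] .

abbreviation "law \<equiv> data_law MX MA pol Xis"

lemma K_pos: "0 < K" using K_ge by simp

lemma pol_pos: "i < n \<Longrightarrow> x \<in> space MX \<Longrightarrow> h \<in> space (O.H i) \<Longrightarrow> a \<in> space MA \<Longrightarrow> 0 < pol i x h a"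
proof -
  assume a: "i < n" "x \<in> space MX" "h \<in> space (O.H i)" "a \<in> space MA"
  have "pol i x h a \<noteq> 0"
  proof
    assume "pol i x h a = 0"
    then show False using ratio[OF a] K_pos by simp
  qed
  then show ?thesis using pol_nonneg[OF a] by simp
qed

lemma pbar_pol: "i < n \<Longrightarrow> x \<in> space MX \<Longrightarrow> h \<in> space (O.H i) \<Longrightarrow> a \<in> space MA \<Longrightarrow>
    0 < pbar i x a \<and> pbar i x a \<le> K * pol i x h a \<and> pol i x h a \<le> K * pbar i x a"
proof -
  assume a: "i < n" "x \<in> space MX" "h \<in> space (O.H i)" "a \<in> space MA"
  have p: "0 < pol i x h a" by (rule pol_pos[OF a])
  from ratio[OF a] have r1: "1 / K \<le> pbar i x a / pol i x h a" and r2: "pbar i x a / pol i x h a \<le> K" by auto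
  have "0 < pbar i x a / pol i x h a" using r1 K_pos by (meson less_le_trans zero_less_divide_1_iff)
  then have pb: "0 < pbar i x a" using p by (simp add: zero_less_divide_iff)
  have "pbar i x a \<le> K * pol i x h a" using r2 p by (simp add: divide_le_eq)
  moreover have "pol i x h a \<le> K * pbar i x a"
    using r1 p K_pos by (simp add: divide_le_eq le_divide_eq mult.commute)
  ultimately show ?thesis using pb by simp
qed

lemma mu_meas: "(\<lambda>p. cond_mean Gams (fst p) (snd p)) \<in> borel_measurable (MX \<Otimes>\<^sub>M MA)"
proof -
  have Gk: "(\<lambda>p. Gams (fst p) (snd p)) \<in> MX \<Otimes>\<^sub>M MA \<rightarrow>\<^sub>M prob_algebra borel"
    using Gm by (simp add: case_prod_beta')
  show ?thesis using kernel_mean_meas(1)[OF Gk] by (simp add: cond_mean_def)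
qed

lemma v_eq: "x \<in> space MX \<Longrightarrow> a \<in> space MA \<Longrightarrow>
   noise_var Gams x a = (\<integral>y. y\<^sup>2 \<partial>Gams x a) - (cond_mean Gams x a)\<^sup>2"
  using var_alt(2)[OF O.Gam_sp(2)[OF Gm] Gint var_fin[unfolded cond_mean_def]]
  by (simp add: noise_var_def cond_mean_def)

lemma v_nonneg: "0 \<le> noise_var Gams x a"
  unfolding noise_var_def by (intro integral_nonneg_AE AE_I2) simp

lemma v_meas: "(\<lambda>p. noise_var Gams (fst p) (snd p)) \<in> borel_measurable (MX \<Otimes>\<^sub>M MA)"
proof -
  have Gk: "(\<lambda>p. Gams (fst p) (snd p)) \<in> MX \<Otimes>\<^sub>M MA \<rightarrow>\<^sub>M prob_algebra borel"
    using Gm by (simp add: case_prod_beta')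
  have "(\<lambda>p. (\<integral>y. y\<^sup>2 \<partial>Gams (fst p) (snd p)) - (cond_mean Gams (fst p) (snd p))\<^sup>2) \<in> borel_measurable (MX \<Otimes>\<^sub>M MA)"
    by (intro borel_measurable_diff borel_measurable_power kernel_mean_meas(2)[OF Gk] mu_meas)
  then show ?thesis
    by (rule measurable_cong[THEN iffD1, rotated]) (auto simp: space_pair_measure v_eq)
qed

lemma g_meas': "(\<lambda>p. g (fst p) (snd p)) \<in> borel_measurable (MX \<Otimes>\<^sub>M MA)"
  using g_meas by (simp add: case_prod_beta')

lemma pbar_meas': "i < n \<Longrightarrow> (\<lambda>p. pbar i (fst p) (snd p)) \<in> borel_measurable (MX \<Otimes>\<^sub>M MA)"
  using pbar_meas by (simp add: case_prod_beta')

definition Phi :: "nat \<Rightarrow> (nat \<Rightarrow> 'x \<times> 'a \<times> real) \<Rightarrow> ennreal" where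
  "Phi i \<omega> = ennreal ((g (fst (\<omega> i)) (fst (snd (\<omega> i))))\<^sup>2
                                * noise_var Gams (fst (\<omega> i)) (fst (snd (\<omega> i)))
                                / (pol i (fst (\<omega> i)) (restrict \<omega> {..<i}) (fst (snd (\<omega> i))))\<^sup>2)"

definition T :: "nat \<Rightarrow> ennreal" where
  "T i = (\<integral>\<^sup>+\<omega>. Phi i \<omega> \<partial>law Gams n)"

lemma sig_eq: "sigma_norm_sq MX MA pol g n Xis Gams = ennreal (1 / real n) * (\<Sum>i<n. T i)"
  unfolding sigma_norm_sq_def T_def Phi_def ..

lemma n_pos: "0 < n"
proof (rule ccontr)
  assume "\<not> 0 < n"
  then have "n = 0" by simp
  have "sigma_norm_sq MX MA pol g n Xis Gams = 0" unfolding sig_eq using \<open>n = 0\<close> by simp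
  with LN_pos show False by simp
qed

definition S2 :: real where "S2 = enn2real (sigma_norm_sq MX MA pol g n Xis Gams)"

lemma S2: "0 < S2" "sigma_norm_sq MX MA pol g n Xis Gams = ennreal S2"
  using LN_pos LN_fin unfolding S2_def
  by (auto simp: enn2real_positive_iff less_top[symmetric])

lemma Phi_meas: "i < m \<Longrightarrow> m \<le> n \<Longrightarrow> Phi i \<in> borel_measurable (O.H m)"
proof -
  assume im: "i < m" "m \<le> n"
  then have i: "i < n" by simp
  have c1: "(\<lambda>\<omega>. \<omega> i) \<in> O.H m \<rightarrow>\<^sub>M MX \<Otimes>\<^sub>M (MA \<Otimes>\<^sub>M borel)"
    unfolding hist_space_def obs_space_def by (rule measurable_component_singleton) (use im in simp)
  have cx: "(\<lambda>\<omega>. fst (\<omega> i)) \<in> O.H m \<rightarrow>\<^sub>M MX"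
    using measurable_compose[OF c1 measurable_fst] by simp
  have ca: "(\<lambda>\<omega>. fst (snd (\<omega> i))) \<in> O.H m \<rightarrow>\<^sub>M MA"
    using measurable_compose[OF measurable_compose[OF c1 measurable_snd] measurable_fst] by simp
  have c2: "(\<lambda>\<omega>. restrict \<omega> {..<i}) \<in> O.H m \<rightarrow>\<^sub>M O.H i"
    unfolding hist_space_def by (rule measurable_restrict_subset) (use im in auto)
  have xa: "(\<lambda>\<omega>. (fst (\<omega> i), fst (snd (\<omega> i)))) \<in> O.H m \<rightarrow>\<^sub>M MX \<Otimes>\<^sub>M MA"
    by (rule measurable_Pair[OF cx ca])
  have xha: "(\<lambda>\<omega>. (fst (\<omega> i), (restrict \<omega> {..<i}, fst (snd (\<omega> i))))) \<in> O.H m \<rightarrow>\<^sub>M MX \<Otimes>\<^sub>M (O.H i \<Otimes>\<^sub>M MA)"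
    by (rule measurable_Pair[OF cx measurable_Pair[OF c2 ca]])
  have gm: "(\<lambda>\<omega>. g (fst (\<omega> i)) (fst (snd (\<omega> i)))) \<in> borel_measurable (O.H m)"
    using measurable_compose[OF xa g_meas'] by simp
  have vm: "(\<lambda>\<omega>. noise_var Gams (fst (\<omega> i)) (fst (snd (\<omega> i)))) \<in> borel_measurable (O.H m)"
    using measurable_compose[OF xa v_meas] by simp
  have pm: "(\<lambda>\<omega>. pol i (fst (\<omega> i)) (restrict \<omega> {..<i}) (fst (snd (\<omega> i)))) \<in> borel_measurable (O.H m)"
    using measurable_compose[OF xha pol_meas[OF i]] by simp
  show ?thesis
    unfolding Phi_def[abs_def]
    by (intro measurable_compose[OF _ measurable_ennreal] borel_measurable_divide borel_measurable_times
        borel_measurable_power gm vm pm)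
qed

lemma Phi_inv: "i < j \<Longrightarrow> Phi i (w(j := z)) = Phi i w"
proof -
  assume ij: "i < j"
  have "restrict (w(j := z)) {..<i} = restrict w {..<i}"
    using ij by (auto simp: restrict_def fun_eq_iff)
  then show ?thesis using ij unfolding Phi_def by simp
qed

definition J :: "nat \<Rightarrow> (nat \<Rightarrow> 'x \<times> 'a \<times> real) \<Rightarrow> ennreal" where
  "J i h = (\<integral>\<^sup>+x. \<integral>\<^sup>+a. ennreal ((g x a)\<^sup>2 * noise_var Gams x a / pol i x h a) \<partial>MA \<partial>Xis)"

lemma J_kern:
  assumes i: "i < n" and h: "h \<in> space (O.H i)"
  shows "(\<integral>\<^sup>+\<omega>. Phi i \<omega> \<partial>O.kern Gams i h) = J i h"
proof -
  have hr: "restrict (h(i := v)) {..<i} = h" for v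
  proof -
    have "h \<in> extensional {..<i}" using h by (simp add: hist_space_def space_PiM PiE_iff)
    then have "restrict h {..<i} = h" by (rule extensional_restrict)
    moreover have "restrict (h(i := v)) {..<i} = restrict h {..<i}" by (auto simp: restrict_def fun_eq_iff)
    ultimately show ?thesis by simp
  qed
  have "(\<integral>\<^sup>+\<omega>. Phi i \<omega> \<partial>O.kern Gams i h) =
     (\<integral>\<^sup>+x. \<integral>\<^sup>+a. ennreal (pol i x h a) * (\<integral>\<^sup>+y. Phi i (h(i := (x, a, y))) \<partial>Gams x a) \<partial>MA \<partial>Xis)"
    by (rule O.nn_kern[OF i Gm h Phi_meas]) (use i in auto)
  also have "\<dots> = J i h"
    unfolding J_def
  proof (intro nn_integral_cong)
    fix x a assume "x \<in> space Xis" and a: "a \<in> space MA"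
    then have x: "x \<in> space MX" by (simp add: sp_Xis)
    have p: "0 < pol i x h a" by (rule pol_pos[OF i x h a])
    have "(\<integral>\<^sup>+y. Phi i (h(i := (x, a, y))) \<partial>Gams x a) = (\<integral>\<^sup>+y. ennreal ((g x a)\<^sup>2 * noise_var Gams x a / (pol i x h a)\<^sup>2) \<partial>Gams x a)"
      by (rule nn_integral_cong) (simp add: Phi_def hr)
    also have "\<dots> = ennreal ((g x a)\<^sup>2 * noise_var Gams x a / (pol i x h a)\<^sup>2)"
      using prob_space.emeasure_space_1[OF O.Gam_sp(2)[OF Gm x a]] by simp
    finally have eq: "(\<integral>\<^sup>+y. Phi i (h(i := (x, a, y))) \<partial>Gams x a) = ennreal ((g x a)\<^sup>2 * noise_var Gams x a / (pol i x h a)\<^sup>2)" .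
    have "ennreal (pol i x h a) * ennreal ((g x a)\<^sup>2 * noise_var Gams x a / (pol i x h a)\<^sup>2)
       = ennreal (pol i x h a * ((g x a)\<^sup>2 * noise_var Gams x a / (pol i x h a)\<^sup>2))"
      by (rule ennreal_mult'[symmetric]) (use p in simp)
    also have "pol i x h a * ((g x a)\<^sup>2 * noise_var Gams x a / (pol i x h a)\<^sup>2) = (g x a)\<^sup>2 * noise_var Gams x a / pol i x h a"
      using p by (simp add: power2_eq_square field_simps)
    finally show "ennreal (pol i x h a) * (\<integral>\<^sup>+y. Phi i (h(i := (x, a, y))) \<partial>Gams x a) = ennreal ((g x a)\<^sup>2 * noise_var Gams x a / pol i x h a)"
      by (simp only: eq)
  qed
  finally show ?thesis .
qed

lemma T_eq: "i < n \<Longrightarrow> T i = (\<integral>\<^sup>+h. J i h \<partial>law Gams i)"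
proof -
  assume i: "i < n"
  have "T i = (\<integral>\<^sup>+\<omega>. Phi i \<omega> \<partial>law Gams (Suc i))"
    unfolding T_def by (rule O.marginal[OF Gm Phi_meas Phi_inv]) (use i in auto)
  also have "\<dots> = (\<integral>\<^sup>+h. (\<integral>\<^sup>+\<omega>. Phi i \<omega> \<partial>O.kern Gams i h) \<partial>law Gams i)"
    by (rule O.nn_law_Suc[OF i Gm Phi_meas]) (use i in auto)
  also have "\<dots> = (\<integral>\<^sup>+h. J i h \<partial>law Gams i)"
  proof (rule nn_integral_cong)
    fix h assume "h \<in> space (law Gams i)"
    then have "h \<in> space (O.H i)" using sets_eq_imp_space_eq[OF O.law_sets(1)[OF Gm, of i]] i by simp
    then show "(\<integral>\<^sup>+\<omega>. Phi i \<omega> \<partial>O.kern Gams i h) = J i h" by (rule J_kern[OF i])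
  qed
  finally show ?thesis .
qed

definition Q :: "nat \<Rightarrow> ennreal" where
  "Q i = (\<integral>\<^sup>+x. \<integral>\<^sup>+a. ennreal ((g x a)\<^sup>2 * noise_var Gams x a / pbar i x a) \<partial>MA \<partial>Xis)"

lemma q_meas: "i < n \<Longrightarrow> (\<lambda>p. ennreal ((g (fst p) (snd p))\<^sup>2 * noise_var Gams (fst p) (snd p) / pbar i (fst p) (snd p)))
   \<in> borel_measurable (MX \<Otimes>\<^sub>M MA)"
  by (intro measurable_compose[OF _ measurable_ennreal] borel_measurable_divide borel_measurable_times
        borel_measurable_power g_meas' v_meas pbar_meas')

lemma qh_meas:
  assumes i: "i < n" and h: "h \<in> space (O.H i)"
  shows "(\<lambda>p. ennreal ((g (fst p) (snd p))\<^sup>2 * noise_var Gams (fst p) (snd p) / pol i (fst p) h (snd p)))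
   \<in> borel_measurable (MX \<Otimes>\<^sub>M MA)"
proof -
  have m: "(\<lambda>p. (fst p, (h, snd p))) \<in> MX \<Otimes>\<^sub>M MA \<rightarrow>\<^sub>M MX \<Otimes>\<^sub>M (O.H i \<Otimes>\<^sub>M MA)"
    using h by (intro measurable_Pair measurable_const) auto
  have pm: "(\<lambda>p. pol i (fst p) h (snd p)) \<in> borel_measurable (MX \<Otimes>\<^sub>M MA)"
    using measurable_compose[OF m pol_meas[OF i]] by simp
  show ?thesis
    by (intro measurable_compose[OF _ measurable_ennreal] borel_measurable_divide borel_measurable_times
        borel_measurable_power g_meas' v_meas pm)
qed

lemma nested_cmult:
  assumes f: "(\<lambda>p. f (fst p) (snd p)) \<in> borel_measurable (MX \<Otimes>\<^sub>M MA)"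
  shows "(\<integral>\<^sup>+x. \<integral>\<^sup>+a. c * f x a \<partial>MA \<partial>Xis) = c * (\<integral>\<^sup>+x. \<integral>\<^sup>+a. f x a \<partial>MA \<partial>Xis)"
proof -
  have "(\<integral>\<^sup>+x. \<integral>\<^sup>+a. c * f x a \<partial>MA \<partial>Xis) = (\<integral>\<^sup>+x. c * \<integral>\<^sup>+a. f x a \<partial>MA \<partial>Xis)"
  proof (rule nn_integral_cong)
    fix x assume "x \<in> space Xis"
    then have x: "x \<in> space MX" by (simp add: sp_Xis)
    show "(\<integral>\<^sup>+a. c * f x a \<partial>MA) = c * \<integral>\<^sup>+a. f x a \<partial>MA"
      by (rule nn_integral_cmult) (use measurable_Pair2[OF f x] in simp)
  qed
  also have "\<dots> = c * (\<integral>\<^sup>+x. \<integral>\<^sup>+a. f x a \<partial>MA \<partial>Xis)"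
  proof (rule nn_integral_cmult)
    have "(\<lambda>x. \<integral>\<^sup>+a. f x a \<partial>MA) \<in> borel_measurable MX"
      using sigma_finite_measure.borel_measurable_nn_integral_fst[OF sfA f] by simp
    then show "(\<lambda>x. \<integral>\<^sup>+a. f x a \<partial>MA) \<in> borel_measurable Xis"
      by (simp add: measurable_cong_sets[OF Xis_sets refl])
  qed
  finally show ?thesis .
qed

lemma pw:
  assumes i: "i < n" and x: "x \<in> space MX" and h: "h \<in> space (O.H i)" and a: "a \<in> space MA"
  shows "ennreal ((g x a)\<^sup>2 * noise_var Gams x a / pol i x h a) \<le> ennreal K * ennreal ((g x a)\<^sup>2 * noise_var Gams x a / pbar i x a)"
    "ennreal ((g x a)\<^sup>2 * noise_var Gams x a / pbar i x a) \<le> ennreal K * ennreal ((g x a)\<^sup>2 * noise_var Gams x a / pol i x h a)"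
proof -
  define q where "q = (g x a)\<^sup>2 * noise_var Gams x a"
  have q: "0 \<le> q" unfolding q_def using v_nonneg by simp
  have p: "0 < pol i x h a" by (rule pol_pos[OF i x h a])
  have pb: "0 < pbar i x a" "pbar i x a \<le> K * pol i x h a" "pol i x h a \<le> K * pbar i x a"
    using pbar_pol[OF i x h a] by auto
  have 1: "q / pol i x h a \<le> K * (q / pbar i x a)"
  proof -
    have "q / pol i x h a = (K * q) / (K * pol i x h a)" using K_pos by simp
    also have "\<dots> \<le> (K * q) / pbar i x a"
      by (rule frac_le) (use q K_pos pb in auto)
    finally show ?thesis by simp
  qed
  have 2: "q / pbar i x a \<le> K * (q / pol i x h a)"
  proof -
    have "q / pbar i x a = (K * q) / (K * pbar i x a)" using K_pos by simp
    also have "\<dots> \<le> (K * q) / pol i x h a"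
      by (rule frac_le) (use q K_pos pb p in auto)
    finally show ?thesis by simp
  qed
  show "ennreal ((g x a)\<^sup>2 * noise_var Gams x a / pol i x h a) \<le> ennreal K * ennreal ((g x a)\<^sup>2 * noise_var Gams x a / pbar i x a)"
    using 1 K_pos unfolding q_def by (simp add: ennreal_mult'[symmetric] ennreal_leI)
  show "ennreal ((g x a)\<^sup>2 * noise_var Gams x a / pbar i x a) \<le> ennreal K * ennreal ((g x a)\<^sup>2 * noise_var Gams x a / pol i x h a)"
    using 2 K_pos unfolding q_def by (simp add: ennreal_mult'[symmetric] ennreal_leI)
qed

lemma JQ:
  assumes i: "i < n" and h: "h \<in> space (O.H i)"
  shows "J i h \<le> ennreal K * Q i" "Q i \<le> ennreal K * J i h"
proof -
  have "J i h \<le> (\<integral>\<^sup>+x. \<integral>\<^sup>+a. ennreal K * ennreal ((g x a)\<^sup>2 * noise_var Gams x a / pbar i x a) \<partial>MA \<partial>Xis)"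
    unfolding J_def by (intro nn_integral_mono pw(1)[OF i _ h]) (auto simp: sp_Xis)
  also have "\<dots> = ennreal K * Q i"
    unfolding Q_def by (rule nested_cmult[OF q_meas[OF i]])
  finally show "J i h \<le> ennreal K * Q i" .
  have "Q i \<le> (\<integral>\<^sup>+x. \<integral>\<^sup>+a. ennreal K * ennreal ((g x a)\<^sup>2 * noise_var Gams x a / pol i x h a) \<partial>MA \<partial>Xis)"
    unfolding Q_def by (intro nn_integral_mono pw(2)[OF i _ h]) (auto simp: sp_Xis)
  also have "\<dots> = ennreal K * J i h"
    unfolding J_def by (rule nested_cmult[OF qh_meas[OF i h]])
  finally show "Q i \<le> ennreal K * J i h" .
qed

lemma T_le: "i < n \<Longrightarrow> T i \<le> ennreal K * Q i"
proof -
  assume i: "i < n"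
  have P: "prob_space (law Gams i)" using O.law_sets(2)[OF Gm, of i] i by simp
  have "T i \<le> (\<integral>\<^sup>+h. ennreal K * Q i \<partial>law Gams i)"
    unfolding T_eq[OF i]
  proof (rule nn_integral_mono)
    fix h assume "h \<in> space (law Gams i)"
    then have "h \<in> space (O.H i)" using sets_eq_imp_space_eq[OF O.law_sets(1)[OF Gm, of i]] i by simp
    then show "J i h \<le> ennreal K * Q i" by (rule JQ(1)[OF i])
  qed
  also have "\<dots> = ennreal K * Q i" using prob_space.emeasure_space_1[OF P] by simp
  finally show ?thesis .
qed

lemma Q_le: "i < n \<Longrightarrow> Q i \<le> ennreal K * T i"
proof -
  assume i: "i < n"
  have P: "prob_space (law Gams i)" using O.law_sets(2)[OF Gm, of i] i by simp
  have sp: "space (law Gams i) = space (O.H i)"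
    using sets_eq_imp_space_eq[OF O.law_sets(1)[OF Gm, of i]] i by simp
  have Jm: "J i \<in> borel_measurable (law Gams i)"
  proof -
    have "(\<lambda>h. \<integral>\<^sup>+\<omega>. Phi i \<omega> \<partial>O.kern Gams i h) \<in> borel_measurable (O.H i)"
      by (rule O.kern_int_meas[OF i Gm Phi_meas]) (use i in auto)
    then have "J i \<in> borel_measurable (O.H i)"
      by (rule measurable_cong[THEN iffD1, rotated]) (simp add: J_kern[OF i])
    then show ?thesis
      using i by (simp add: measurable_cong_sets[OF O.law_sets(1)[OF Gm] refl])
  qed
  have "Q i = (\<integral>\<^sup>+h. Q i \<partial>law Gams i)" using prob_space.emeasure_space_1[OF P] by simp
  also have "\<dots> \<le> (\<integral>\<^sup>+h. ennreal K * J i h \<partial>law Gams i)"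
    by (rule nn_integral_mono) (use JQ(2)[OF i] sp in auto)
  also have "\<dots> = ennreal K * T i"
    unfolding T_eq[OF i] by (rule nn_integral_cmult[OF Jm])
  finally show ?thesis .
qed

lemma sumT: "(\<Sum>i<n. T i) = ennreal (real n * S2)"
proof -
  have "ennreal (real n) * ennreal (1 / real n) = 1"
    using n_pos by (simp add: ennreal_mult'[symmetric])
  then have "(\<Sum>i<n. T i) = ennreal (real n) * (ennreal (1 / real n) * (\<Sum>i<n. T i))"
    by (simp add: mult.assoc[symmetric])
  also have "\<dots> = ennreal (real n) * ennreal S2" using sig_eq S2(2) by simp
  also have "\<dots> = ennreal (real n * S2)" by (simp add: ennreal_mult')
  finally show ?thesis .
qed

lemma T_fin: "i < n \<Longrightarrow> T i < \<infinity>"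
proof -
  assume i: "i < n"
  have "T i \<le> (\<Sum>i<n. T i)" by (rule member_le_sum) (use i in auto)
  also have "\<dots> < \<infinity>" unfolding sumT by simp
  finally show ?thesis .
qed

lemma ex_i0: "\<exists>i<n. S2 \<le> enn2real (T i)"
proof (rule ccontr)
  assume "\<not> (\<exists>i<n. S2 \<le> enn2real (T i))"
  then have lt: "\<And>i. i < n \<Longrightarrow> enn2real (T i) < S2" by (simp add: not_le)
  have "(\<Sum>i<n. enn2real (T i)) < (\<Sum>i<n. S2)"
    by (rule sum_strict_mono) (use lt n_pos in auto)
  also have "\<dots> = real n * S2" by simp
  also have "\<dots> = enn2real (\<Sum>i<n. T i)" unfolding sumT using S2(1) by simp
  also have "\<dots> = (\<Sum>i<n. enn2real (T i))"
    using enn2real_sum[of "{..<n}" T] T_fin by (simp add: comp_def top.not_eq_extremum)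
  finally show False by simp
qed

definition i0 :: nat where "i0 = (SOME i. i < n \<and> S2 \<le> enn2real (T i))"

lemma i0: "i0 < n" "S2 \<le> enn2real (T i0)"
  using someI_ex[OF ex_i0[unfolded Bex_def[symmetric]]] unfolding i0_def
  by auto

lemma Q_fin: "Q i0 < \<infinity>"
  using Q_le[OF i0(1)] T_fin[OF i0(1)] by (simp add: ennreal_mult_less_top le_less_trans top.not_eq_extremum)

definition Qr :: real where "Qr = enn2real (Q i0)"

lemma Qr: "0 \<le> Qr" "Q i0 = ennreal Qr" "S2 \<le> K * Qr"
proof -
  show "0 \<le> Qr" unfolding Qr_def by simp
  show "Q i0 = ennreal Qr" unfolding Qr_def using Q_fin by simp
  have "enn2real (T i0) \<le> enn2real (ennreal K * Q i0)"
    by (rule enn2real_mono[OF T_le[OF i0(1)]]) (use Q_fin in \<open>simp add: ennreal_mult_less_top\<close>)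
  also have "\<dots> = K * Qr" unfolding Qr_def using K_pos by (simp add: enn2real_mult)
  finally show "S2 \<le> K * Qr" using i0(2) by simp
qed

definition cc :: real where "cc = sqrt S2 * sqrt (real n)"
definition s :: "'x \<Rightarrow> 'a \<Rightarrow> real" where "s x a = g x a * noise_var Gams x a / (pbar i0 x a * cc)"
definition eps :: real where "eps = 1 / (2 * real n)"
definition Mf :: "'x \<Rightarrow> 'a \<Rightarrow> real" where "Mf x a = cond_mean Gams x a + s x a / eps"
definition Gam1 :: "'x \<Rightarrow> 'a \<Rightarrow> real measure" where "Gam1 x a = mix eps (return borel (Mf x a)) (Gams x a)"

lemma cc_pos: "0 < cc" unfolding cc_def using S2(1) n_pos by simp

lemma eps: "0 < eps" "eps \<le> 1" "real n * eps = 1 / 2"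
  unfolding eps_def using n_pos by (auto simp: field_simps)

lemma s_meas: "(\<lambda>p. s (fst p) (snd p)) \<in> borel_measurable (MX \<Otimes>\<^sub>M MA)"
  unfolding s_def by (intro borel_measurable_divide borel_measurable_times borel_measurable_const
        g_meas' v_meas pbar_meas'[OF i0(1)])

lemma Mf_meas: "(\<lambda>p. Mf (fst p) (snd p)) \<in> borel_measurable (MX \<Otimes>\<^sub>M MA)"
  unfolding Mf_def by (intro borel_measurable_add borel_measurable_divide borel_measurable_const mu_meas s_meas)

lemma gs: "x \<in> space MX \<Longrightarrow> a \<in> space MA \<Longrightarrow> g x a * s x a = ((g x a)\<^sup>2 * noise_var Gams x a / pbar i0 x a) / cc"
  unfolding s_def by (simp add: power2_eq_square)

lemma s_le: "x \<in> space MX \<Longrightarrow> a \<in> space MA \<Longrightarrow> \<bar>s x a\<bar> \<le> \<delta> x a"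
proof -
  assume x: "x \<in> space MX" and a: "a \<in> space MA"
  obtain h where h: "h \<in> space (O.H i0)"
  proof -
    have "prob_space (law Gams i0)" using O.law_sets(2)[OF Gm, of i0] i0(1) by simp
    then have "space (law Gams i0) \<noteq> {}" by (rule prob_space.not_empty)
    then show ?thesis using that sets_eq_imp_space_eq[OF O.law_sets(1)[OF Gm, of i0]] i0(1) by auto
  qed
  have pb: "0 < pbar i0 x a" using pbar_pol[OF i0(1) x h a] by simp
  have v: "0 \<le> noise_var Gams x a" by (rule v_nonneg)
  have sn: "0 < sqrt (real n)" using n_pos by simp
  define X where "X = \<bar>g x a\<bar> * noise_var Gams x a / (pbar i0 x a * sqrt S2)"
  have LN': "X \<le> sqrt (real n) * \<delta> x a"
    using LN[OF i0(1) x a] unfolding X_def S2_def .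
  have "\<bar>s x a\<bar> = X / sqrt (real n)"
    unfolding s_def X_def cc_def using pb v S2(1) by (simp add: abs_mult abs_divide field_simps)
  also have "\<dots> \<le> \<delta> x a" using LN' sn by (simp add: divide_le_eq mult.commute)
  finally show ?thesis .
qed

lemma Gk: "(\<lambda>p. Gams (fst p) (snd p)) \<in> MX \<Otimes>\<^sub>M MA \<rightarrow>\<^sub>M prob_algebra borel"
  using Gm by (simp add: case_prod_beta')

lemma Gams_sp: "x \<in> space MX \<Longrightarrow> a \<in> space MA \<Longrightarrow> Gams x a \<in> space (prob_algebra borel)"
  using measurable_space[OF Gm, of "(x, a)"] by (simp add: space_pair_measure)

lemma G1m: "(\<lambda>(x, a). Gam1 x a) \<in> MX \<Otimes>\<^sub>M MA \<rightarrow>\<^sub>M prob_algebra borel"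
  using mix_meas[OF Mf_meas Gk, of eps] by (simp add: Gam1_def case_prod_beta')

lemma G1mean:
  assumes x: "x \<in> space MX" and a: "a \<in> space MA"
  shows "integrable (Gam1 x a) (\<lambda>y. y)" "cond_mean Gam1 x a = cond_mean Gams x a + s x a"
proof -
  have e: "0 \<le> eps" "eps \<le> 1" using eps by auto
  show "integrable (Gam1 x a) (\<lambda>y. y)"
    unfolding Gam1_def by (rule mix_mean(1)[OF Gams_sp[OF x a] e Gint[OF x a]])
  have "cond_mean Gam1 x a = eps * Mf x a + (1 - eps) * cond_mean Gams x a"
    unfolding Gam1_def cond_mean_def by (rule mix_mean(2)[OF Gams_sp[OF x a] e Gint[OF x a]])
  also have "\<dots> = cond_mean Gams x a + s x a"
    unfolding Mf_def using eps(1) by (simp add: field_simps)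
  finally show "cond_mean Gam1 x a = cond_mean Gams x a + s x a" .
qed

lemma inst1: "is_instance MX MA Xis Gam1"
  unfolding is_instance_def using Xis_prob Xis_sets G1m G1mean(1) by auto

lemma KL: "KL_le Xis Xis (1 / real n)"
proof -
  interpret P: prob_space Xis by (rule Xis_prob)
  have ae: "AE x in Xis. 1 = RN_deriv Xis Xis x"
    by (rule P.RN_deriv_unique) (auto simp: density_1)
  have i0: "integrable Xis (\<lambda>x. 0::real)" by simp
  have ae2: "AE x in Xis. 0 = ln (enn2real (RN_deriv Xis Xis x))"
    using ae by eventually_elim simp
  have "integrable Xis (\<lambda>x. ln (enn2real (RN_deriv Xis Xis x)))"
    by (rule integrable_cong_AE_imp[OF i0 _ ae2]) measurable
  moreover have "KL_divergence (exp 1) Xis Xis = 0" by (rule P.KL_same_eq_0)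
  ultimately show ?thesis unfolding KL_le_def absolutely_continuous_def by simp
qed

definition q :: "'x \<Rightarrow> 'a \<Rightarrow> real" where "q x a = (g x a)\<^sup>2 * noise_var Gams x a / pbar i0 x a"

lemma q_nonneg: "x \<in> space MX \<Longrightarrow> a \<in> space MA \<Longrightarrow> 0 \<le> q x a"
  unfolding q_def using pbar_nonneg[OF i0(1)] v_nonneg by simp

lemma qm: "(\<lambda>p. q (fst p) (snd p)) \<in> borel_measurable (MX \<Otimes>\<^sub>M MA)"
  unfolding q_def by (intro borel_measurable_divide borel_measurable_times
        borel_measurable_power g_meas' v_meas pbar_meas'[OF i0(1)])

lemma qem: "(\<lambda>p. ennreal (q (fst p) (snd p))) \<in> borel_measurable (MX \<Otimes>\<^sub>M MA)"
  by (rule measurable_compose[OF qm measurable_ennreal])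

lemma Fq: "(\<lambda>x. \<integral>\<^sup>+a. ennreal (q x a) \<partial>MA) \<in> borel_measurable Xis"
  using sigma_finite_measure.borel_measurable_nn_integral_fst[OF sfA qem]
  by (simp add: measurable_cong_sets[OF Xis_sets refl])

lemma Qq: "Q i0 = (\<integral>\<^sup>+x. \<integral>\<^sup>+a. ennreal (q x a) \<partial>MA \<partial>Xis)"
  unfolding Q_def q_def ..

lemma AEfin: "AE x in Xis. (\<integral>\<^sup>+a. ennreal (q x a) \<partial>MA) \<noteq> \<infinity>"
  by (rule nn_integral_PInf_AE[OF Fq]) (use Q_fin Qq in simp)

lemma q_int:
  assumes x: "x \<in> space MX" and fin: "(\<integral>\<^sup>+a. ennreal (q x a) \<partial>MA) \<noteq> \<infinity>"
  shows "integrable MA (q x)" "(\<integral>a. q x a \<partial>MA) = enn2real (\<integral>\<^sup>+a. ennreal (q x a) \<partial>MA)"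
proof -
  have m: "q x \<in> borel_measurable MA" using measurable_Pair2[OF qm x] by simp
  have nn: "AE a in MA. 0 \<le> q x a" using q_nonneg[OF x] by (intro AE_I2) auto
  show "integrable MA (q x)" by (rule integrableI_nonneg[OF m nn]) (use fin in \<open>simp add: top.not_eq_extremum\<close>)
  show "(\<integral>a. q x a \<partial>MA) = enn2real (\<integral>\<^sup>+a. ennreal (q x a) \<partial>MA)"
    by (rule integral_eq_nn_integral[OF m nn])
qed

definition Iq :: "'x \<Rightarrow> real" where "Iq x = enn2real (\<integral>\<^sup>+a. ennreal (q x a) \<partial>MA)"

lemma Iq_meas: "Iq \<in> borel_measurable Xis"
  unfolding Iq_def[abs_def] by (rule borel_measurable_enn2real[OF Fq])

lemma Iq_nn: "(\<integral>\<^sup>+x. ennreal (Iq x) \<partial>Xis) = Q i0"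
  unfolding Qq Iq_def
  by (rule nn_integral_cong_AE) (use AEfin in \<open>eventually_elim, simp add: ennreal_enn2real_if\<close>)

lemma Iq_int: "integrable Xis Iq" "(\<integral>x. Iq x \<partial>Xis) = Qr"
proof -
  have nn: "AE x in Xis. 0 \<le> Iq x" by (intro AE_I2) (simp add: Iq_def)
  show "integrable Xis Iq" by (rule integrableI_nonneg[OF Iq_meas nn]) (use Iq_nn Q_fin in simp)
  show "(\<integral>x. Iq x \<partial>Xis) = Qr"
    using integral_eq_nn_integral[OF Iq_meas nn] Iq_nn Qr_def by simp
qed

definition I0 :: "'x \<Rightarrow> real" where "I0 x = (\<integral>a. g x a * cond_mean Gams x a \<partial>MA)"
definition I1 :: "'x \<Rightarrow> real" where "I1 x = (\<integral>a. g x a * cond_mean Gam1 x a \<partial>MA)"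

lemma mu1_meas: "(\<lambda>p. cond_mean Gam1 (fst p) (snd p)) \<in> borel_measurable (MX \<Otimes>\<^sub>M MA)"
proof -
  have Gk1: "(\<lambda>p. Gam1 (fst p) (snd p)) \<in> MX \<Otimes>\<^sub>M MA \<rightarrow>\<^sub>M prob_algebra borel"
    using G1m by (simp add: case_prod_beta')
  show ?thesis using kernel_mean_meas(1)[OF Gk1] by (simp add: cond_mean_def)
qed

lemma I0_meas: "I0 \<in> borel_measurable Xis"
proof -
  have "(\<lambda>(x, a). g x a * cond_mean Gams x a) \<in> borel_measurable (MX \<Otimes>\<^sub>M MA)"
    using borel_measurable_times[OF g_meas' mu_meas] by (simp add: case_prod_beta')
  from sigma_finite_measure.borel_measurable_lebesgue_integral[OF sfA this]
  show ?thesis unfolding I0_def[abs_def] by (simp add: measurable_cong_sets[OF Xis_sets refl])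
qed

lemma I1_meas: "I1 \<in> borel_measurable Xis"
proof -
  have "(\<lambda>(x, a). g x a * cond_mean Gam1 x a) \<in> borel_measurable (MX \<Otimes>\<^sub>M MA)"
    using borel_measurable_times[OF g_meas' mu1_meas] by (simp add: case_prod_beta')
  from sigma_finite_measure.borel_measurable_lebesgue_integral[OF sfA this]
  show ?thesis unfolding I1_def[abs_def] by (simp add: measurable_cong_sets[OF Xis_sets refl])
qed

lemma I1_eq:
  assumes x: "x \<in> space MX" and fin: "(\<integral>\<^sup>+a. ennreal (q x a) \<partial>MA) \<noteq> \<infinity>"
    and int0: "integrable MA (\<lambda>a. g x a * cond_mean Gams x a)"
  shows "integrable MA (\<lambda>a. g x a * cond_mean Gam1 x a)" "I1 x = I0 x + Iq x / cc"
proof -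
  have eq: "\<And>a. a \<in> space MA \<Longrightarrow> g x a * cond_mean Gam1 x a = g x a * cond_mean Gams x a + q x a / cc"
    using G1mean(2)[OF x] gs[OF x] by (simp add: q_def distrib_left)
  have intq: "integrable MA (\<lambda>a. q x a / cc)" using q_int(1)[OF x fin] by simp
  have int2: "integrable MA (\<lambda>a. g x a * cond_mean Gams x a + q x a / cc)"
    using int0 intq by simp
  show "integrable MA (\<lambda>a. g x a * cond_mean Gam1 x a)"
    using int2 by (subst Bochner_Integration.integrable_cong[OF refl eq]) auto
  have "I1 x = (\<integral>a. g x a * cond_mean Gams x a + q x a / cc \<partial>MA)"
    unfolding I1_def by (rule Bochner_Integration.integral_cong[OF refl eq])
  also have "\<dots> = I0 x + (\<integral>a. q x a \<partial>MA) / cc"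
    unfolding I0_def using int0 intq by simp
  also have "\<dots> = I0 x + Iq x / cc" using q_int(2)[OF x fin] Iq_def by simp
  finally show "I1 x = I0 x + Iq x / cc" .
qed

lemma tau0: "AE x in Xis. integrable MA (\<lambda>a. g x a * cond_mean Gams x a)" "integrable Xis I0"
  using tau_def unfolding tau_defined_def I0_def[abs_def] by auto

lemma AE_I1: "AE x in Xis. integrable MA (\<lambda>a. g x a * cond_mean Gam1 x a) \<and> I1 x = I0 x + Iq x / cc"
  using tau0(1) AEfin AE_space
proof eventually_elim
  case (elim x)
  then show ?case using I1_eq[of x] AE_space sp_Xis by auto
qed

lemma tau1: "tau MA g Xis Gam1 = tau MA g Xis Gams + Qr / cc" "tau_defined MA g Xis Gam1"
proof -
  have sm: "(\<lambda>x. I0 x + Iq x / cc) \<in> borel_measurable Xis"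
    using I0_meas Iq_meas by measurable
  have ae: "AE x in Xis. I1 x = I0 x + Iq x / cc" using AE_I1 by eventually_elim simp
  have si: "integrable Xis (\<lambda>x. I0 x + Iq x / cc)" using tau0(2) Iq_int(1) by simp
  have "tau MA g Xis Gam1 = (\<integral>x. I1 x \<partial>Xis)" unfolding Defs.tau_def I1_def ..
  also have "\<dots> = (\<integral>x. I0 x + Iq x / cc \<partial>Xis)" by (rule integral_cong_AE[OF I1_meas sm ae])
  also have "\<dots> = (\<integral>x. I0 x \<partial>Xis) + (\<integral>x. Iq x \<partial>Xis) / cc"
    using tau0(2) Iq_int(1) by simp
  also have "\<dots> = tau MA g Xis Gams + Qr / cc" using Iq_int(2) unfolding Defs.tau_def I0_def by simp
  finally show "tau MA g Xis Gam1 = tau MA g Xis Gams + Qr / cc" .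
  have "integrable Xis I1"
    by (rule integrable_cong_AE_imp[OF si I1_meas]) (use ae in \<open>eventually_elim, simp\<close>)
  moreover have "AE x in Xis. integrable MA (\<lambda>a. g x a * cond_mean Gam1 x a)"
    using AE_I1 by eventually_elim simp
  ultimately show "tau_defined MA g Xis Gam1"
    unfolding tau_defined_def I1_def[abs_def] by simp
qed

lemma cls0: "(Xis, Gams) \<in> local_class MX MA g n \<delta> Xis Gams"
  unfolding local_class_def using inst tau_def KL delta_nonneg by auto

lemma cls1: "(Xis, Gam1) \<in> local_class MX MA g n \<delta> Xis Gams"
  unfolding local_class_def using inst1 tau1(2) KL s_le G1mean(2) by auto

lemma law_cmp:
  assumes F: "F \<in> borel_measurable (O.H n)"
  shows "ennreal (1 / 2) * (\<integral>\<^sup>+\<omega>. F \<omega> \<partial>law Gams n) \<le> (\<integral>\<^sup>+\<omega>. F \<omega> \<partial>law Gam1 n)"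
proof -
  have e: "0 \<le> eps" "eps \<le> 1" using eps by auto
  have cmp: "ennreal (1 - eps) * (\<integral>\<^sup>+y. G y \<partial>Gams x a) \<le> (\<integral>\<^sup>+y. G y \<partial>Gam1 x a)"
    if "x \<in> space MX" "a \<in> space MA" "G \<in> borel_measurable borel" for x a G
    unfolding Gam1_def
    by (rule mix_ge[OF _ Gams_sp[OF that(1,2)] e that(3)]) (simp add: space_prob_algebra prob_space_return)
  have half: "ennreal (1 / 2) \<le> ennreal (1 - eps) ^ n"
  proof -
    have "1 + real n * (- eps) \<le> (1 + (- eps)) ^ n"
      by (rule Bernoulli_inequality) (use e in simp)
    then have "1 / 2 \<le> (1 - eps) ^ n" using eps(3) by simp
    then have "ennreal (1 / 2) \<le> ennreal ((1 - eps) ^ n)" by (rule ennreal_leI)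
    then show ?thesis using e by (simp add: ennreal_power)
  qed
  have "ennreal (1 / 2) * (\<integral>\<^sup>+\<omega>. F \<omega> \<partial>law Gams n) \<le> ennreal (1 - eps) ^ n * (\<integral>\<^sup>+\<omega>. F \<omega> \<partial>law Gams n)"
    by (rule mult_right_mono[OF half]) simp
  also have "\<dots> \<le> (\<integral>\<^sup>+\<omega>. F \<omega> \<partial>law Gam1 n)"
    by (rule O.compare[OF Gm G1m cmp order.refl F])
  finally show ?thesis .
qed

definition Dl :: real where "Dl = Qr / cc"

lemma Dl: "S2 / (K\<^sup>2 * real n) \<le> Dl\<^sup>2" "0 \<le> Dl"
proof -
  have sS: "0 < sqrt S2" using S2(1) by simp
  have sn: "0 < sqrt (real n)" using n_pos by simp
  have "S2 / K \<le> Qr" using Qr(3) K_pos by (simp add: divide_le_eq mult.commute)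
  then have "(S2 / K) / cc \<le> Qr / cc" by (rule divide_right_mono) (use cc_pos in simp)
  moreover have "(S2 / K) / cc = sqrt S2 / (K * sqrt (real n))"
    unfolding cc_def using sS sn K_pos S2(1)
    by (simp add: field_simps)
  ultimately have le: "sqrt S2 / (K * sqrt (real n)) \<le> Dl" unfolding Dl_def by simp
  have nn: "0 \<le> sqrt S2 / (K * sqrt (real n))" using sS sn K_pos by simp
  have "(sqrt S2 / (K * sqrt (real n)))\<^sup>2 \<le> Dl\<^sup>2" by (rule power_mono[OF le nn])
  moreover have "(sqrt S2 / (K * sqrt (real n)))\<^sup>2 = S2 / (K\<^sup>2 * real n)"
    using S2(1) by (simp add: power_divide power_mult_distrib)
  ultimately show "S2 / (K\<^sup>2 * real n) \<le> Dl\<^sup>2" by simp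
  show "0 \<le> Dl" unfolding Dl_def using Qr(1) cc_pos by simp
qed

lemma target_le: "1 / (8 * K ^ 4) * (S2 / real n) \<le> Dl\<^sup>2 / 6"
proof -
  have K2: "K\<^sup>2 \<le> K ^ 4" using K_ge by (simp add: power_increasing)
  have K2p: "0 < K\<^sup>2" using K_pos by simp
  have "1 / (8 * K ^ 4) * (S2 / real n) = S2 / (8 * K ^ 4 * real n)" by simp
  also have "\<dots> \<le> S2 / (6 * K\<^sup>2 * real n)"
    by (rule divide_left_mono) (use S2(1) n_pos K2 K2p in \<open>auto intro!: mult_right_mono mult_mono\<close>)
  also have "\<dots> = (S2 / (K\<^sup>2 * real n)) / 6" by simp
  also have "\<dots> \<le> Dl\<^sup>2 / 6" using Dl(1) by simp
  finally show ?thesis .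
qed

lemma final:
  "ennreal (1 / (8 * K ^ 4) * (enn2real (sigma_norm_sq MX MA pol g n Xis Gams) / real n))
           \<le> local_minimax MX MA pol g n (local_class MX MA g n \<delta> Xis Gams)"
  unfolding local_minimax_def
proof (rule INF_greatest)
  fix est :: "(nat \<Rightarrow> 'x \<times> 'a \<times> real) \<Rightarrow> real" assume est: "est \<in> borel_measurable (O.H n)"
  define C where "C = local_class MX MA g n \<delta> Xis Gams"
  define Sp where "Sp = (SUP I \<in> C. \<integral>\<^sup>+ \<omega>. ennreal ((est \<omega> - tau MA g (fst I) (snd I))\<^sup>2)
                          \<partial>data_law MX MA pol (fst I) (snd I) n)"
  define t0 where "t0 = tau MA g Xis Gams"
  define R0 where "R0 = (\<integral>\<^sup>+ \<omega>. ennreal ((est \<omega> - t0)\<^sup>2) \<partial>law Gams n)"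
  define R1 where "R1 = (\<integral>\<^sup>+ \<omega>. ennreal ((est \<omega> - (t0 + Dl))\<^sup>2) \<partial>law Gam1 n)"
  define X where "X = (\<integral>\<^sup>+ \<omega>. ennreal ((est \<omega> - (t0 + Dl))\<^sup>2) \<partial>law Gams n)"
  have R0S: "R0 \<le> Sp"
    unfolding Sp_def R0_def t0_def by (rule SUP_upper2[OF cls0[folded C_def]]) simp
  have R1S: "R1 \<le> Sp"
    unfolding Sp_def R1_def t0_def by (rule SUP_upper2[OF cls1[folded C_def]]) (simp add: tau1(1) Dl_def)
  have sl: "sets (law Gams n) = sets (O.H n)" using O.law_sets(1)[OF Gm, of n] by simp
  have P0: "prob_space (law Gams n)" using O.law_sets(2)[OF Gm, of n] by simp
  have m1: "(\<lambda>\<omega>. ennreal ((est \<omega> - c)\<^sup>2)) \<in> borel_measurable (O.H n)" for c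
    using est by measurable
  have m0: "(\<lambda>\<omega>. ennreal ((est \<omega> - c)\<^sup>2)) \<in> borel_measurable (law Gams n)" for c
    using m1 by (simp add: measurable_cong_sets[OF sl refl])
  have XR1: "ennreal (1 / 2) * X \<le> R1" unfolding X_def R1_def by (rule law_cmp[OF m1])
  have X2: "X \<le> 2 * R1"
  proof -
    have two: "2 * ennreal (1 / 2) = 1"
    proof -
      have "ennreal (2 * (1 / 2)) = ennreal 2 * ennreal (1 / 2)" by (rule ennreal_mult') simp
      then show ?thesis by simp
    qed
    have "X = 2 * (ennreal (1 / 2) * X)" using two by (metis mult.assoc mult_1)
    also have "\<dots> \<le> 2 * R1" by (rule mult_left_mono[OF XR1]) simp
    finally show ?thesis .
  qed
  have pt: "Dl\<^sup>2 / 2 \<le> (u - t0)\<^sup>2 + (u - (t0 + Dl))\<^sup>2" for u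
  proof -
    have "(u - t0)\<^sup>2 + (u - (t0 + Dl))\<^sup>2 - Dl\<^sup>2 / 2 = (2 * (u - t0) - Dl)\<^sup>2 / 2"
      by (simp add: power2_eq_square algebra_simps)
    moreover have "0 \<le> (2 * (u - t0) - Dl)\<^sup>2 / 2" by simp
    ultimately show ?thesis by linarith
  qed
  have "ennreal (Dl\<^sup>2 / 2) = (\<integral>\<^sup>+ \<omega>. ennreal (Dl\<^sup>2 / 2) \<partial>law Gams n)"
    using prob_space.emeasure_space_1[OF P0] by simp
  also have "\<dots> \<le> (\<integral>\<^sup>+ \<omega>. ennreal ((est \<omega> - t0)\<^sup>2) + ennreal ((est \<omega> - (t0 + Dl))\<^sup>2) \<partial>law Gams n)"
  proof (rule nn_integral_mono)
    fix \<omega>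
    have "ennreal (Dl\<^sup>2 / 2) \<le> ennreal ((est \<omega> - t0)\<^sup>2 + (est \<omega> - (t0 + Dl))\<^sup>2)"
      by (rule ennreal_leI[OF pt])
    then show "ennreal (Dl\<^sup>2 / 2) \<le> ennreal ((est \<omega> - t0)\<^sup>2) + ennreal ((est \<omega> - (t0 + Dl))\<^sup>2)"
      by (simp add: ennreal_plus)
  qed
  also have "\<dots> = R0 + X"
    unfolding R0_def X_def by (rule nn_integral_add[OF m0 m0])
  also have "\<dots> \<le> Sp + 2 * Sp"
    by (rule add_mono[OF R0S order.trans[OF X2 mult_left_mono[OF R1S]]]) simp
  also have "\<dots> = (1 + 2) * Sp" by (simp only: distrib_right mult_1_left)
  also have "\<dots> = 3 * Sp" by simp
  finally have D3: "ennreal (Dl\<^sup>2 / 2) \<le> 3 * Sp" .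
  have "ennreal (1 / (8 * K ^ 4) * (enn2real (sigma_norm_sq MX MA pol g n Xis Gams) / real n)) \<le> ennreal (Dl\<^sup>2 / 6)"
    using target_le unfolding S2_def by (rule ennreal_leI)
  also have "\<dots> = ennreal (1 / 3) * ennreal (Dl\<^sup>2 / 2)"
    by (simp add: ennreal_mult'[symmetric])
  also have "\<dots> \<le> ennreal (1 / 3) * (3 * Sp)" by (rule mult_left_mono[OF D3]) simp
  also have "\<dots> = Sp"
  proof -
    have three: "ennreal (1 / 3) * 3 = 1"
    proof -
      have "ennreal ((1 / 3) * 3) = ennreal (1 / 3) * ennreal 3" by (rule ennreal_mult') simp
      then show ?thesis by simp
    qed
    show ?thesis using three by (metis mult.assoc mult_1)
  qed
  finally show "ennreal (1 / (8 * K ^ 4) * (enn2real (sigma_norm_sq MX MA pol g n Xis Gams) / real n)) \<le> Sp" .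
qed

end

theorem lemma4:
  fixes MX :: "'x measure" and MA :: "'a measure"
    and pol :: "nat \<Rightarrow> 'x \<Rightarrow> (nat \<Rightarrow> 'x \<times> 'a \<times> real) \<Rightarrow> 'a \<Rightarrow> real"
    and pbar :: "nat \<Rightarrow> 'x \<Rightarrow> 'a \<Rightarrow> real"
    and g \<delta> :: "'x \<Rightarrow> 'a \<Rightarrow> real"
    and Xis :: "'x measure" and Gams :: "'x \<Rightarrow> 'a \<Rightarrow> real measure"
    and n :: nat and K :: real
  assumes sfX: "sigma_finite_measure MX"
    and sfA: "sigma_finite_measure MA"
    and pol_meas: "\<And>i. i < n \<Longrightarrow>
        (\<lambda>(x, h, a). pol i x h a) \<in> borel_measurable (MX \<Otimes>\<^sub>M (hist_space MX MA i \<Otimes>\<^sub>M MA))"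
    and pol_nonneg: "\<And>i x h a. i < n \<Longrightarrow> x \<in> space MX \<Longrightarrow> h \<in> space (hist_space MX MA i) \<Longrightarrow>
        a \<in> space MA \<Longrightarrow> 0 \<le> pol i x h a"
    and pol_dens: "\<And>i x h. i < n \<Longrightarrow> x \<in> space MX \<Longrightarrow> h \<in> space (hist_space MX MA i) \<Longrightarrow>
        (\<integral>\<^sup>+ a. ennreal (pol i x h a) \<partial>MA) = 1"
    and g_meas: "(\<lambda>(x, a). g x a) \<in> borel_measurable (MX \<Otimes>\<^sub>M MA)"
    and delta_nonneg: "\<And>x a. x \<in> space MX \<Longrightarrow> a \<in> space MA \<Longrightarrow> 0 \<le> \<delta> x a"
    and inst: "is_instance MX MA Xis Gams"
    and tau_def: "tau_defined MA g Xis Gams"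
    and var_fin: "\<And>x a. x \<in> space MX \<Longrightarrow> a \<in> space MA \<Longrightarrow>
        integrable (Gams x a) (\<lambda>y. (y - cond_mean Gams x a)\<^sup>2)"
    and K_ge: "1 \<le> K"
    and pbar_meas: "\<And>i. i < n \<Longrightarrow> (\<lambda>(x, a). pbar i x a) \<in> borel_measurable (MX \<Otimes>\<^sub>M MA)"
    and pbar_nonneg: "\<And>i x a. i < n \<Longrightarrow> x \<in> space MX \<Longrightarrow> a \<in> space MA \<Longrightarrow> 0 \<le> pbar i x a"
    and pbar_dens: "\<And>i x. i < n \<Longrightarrow> x \<in> space MX \<Longrightarrow> (\<integral>\<^sup>+ a. ennreal (pbar i x a) \<partial>MA) = 1"
    and ratio: "\<And>i x h a. i < n \<Longrightarrow> x \<in> space MX \<Longrightarrow> h \<in> space (hist_space MX MA i) \<Longrightarrow>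
        a \<in> space MA \<Longrightarrow> 1 / K \<le> pbar i x a / pol i x h a \<and> pbar i x a / pol i x h a \<le> K"
    and LN_pos: "0 < sigma_norm_sq MX MA pol g n Xis Gams"
    and LN_fin: "sigma_norm_sq MX MA pol g n Xis Gams < \<infinity>"
    and LN: "\<And>i x a. i < n \<Longrightarrow> x \<in> space MX \<Longrightarrow> a \<in> space MA \<Longrightarrow>
        sqrt (real n) * \<delta> x a \<ge>
          \<bar>g x a\<bar> * noise_var Gams x a /
            (pbar i x a * sqrt (enn2real (sigma_norm_sq MX MA pol g n Xis Gams)))"
  shows "ennreal (1 / (8 * K ^ 4) * (enn2real (sigma_norm_sq MX MA pol g n Xis Gams) / real n))
           \<le> local_minimax MX MA pol g n (local_class MX MA g n \<delta> Xis Gams)"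
  by (rule MAIN.final[OF MAIN.intro[OF sfX sfA pol_meas pol_nonneg pol_dens g_meas delta_nonneg inst
      tau_def var_fin K_ge pbar_meas pbar_nonneg pbar_dens ratio LN_pos LN_fin LN]])

end
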